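(* Let $1\le k\le n\le 4$ and let $\mathcal{C}$ be a strict $n$-category. Then any functor between $(n-k)$-categories of $k$-morphisms in $\mathcal{C}$ given by composition with invertible morphisms of dimension $\le k$ is essentially surjective. When $k=n$, any such functor is a bijection.
   Context: For parallel $(k-1)$-morphisms $x,y$ in a strict $n$-category, the $k$-morphisms $x\to y$ form a strict $(n-k)$-category $k\mathrm{Hom}(x,y)$. Composing (whiskering) with a fixed morphism $h$ of dimension $\ell\le k$ along an $(\ell-1)$-morphism gives a functor from such an $(n-k)$-category of $k$-morphisms to another; the functors considered are composites of such functors with $h$ invertible. In a strict $n$-category an $n$-morphism is an equivalence iff it is an isomorphism, and for $j<n$ a $j$-morphism $f:x\to y$ is an equivalence (invertible, weakly invertible) if there exist $g:y\to x$ and equivalences $f\circ g\to\mathrm{id}_y$ and $g\circ f\to\mathrm{id}_x$. A functor $F:\mathcal{A}\to\mathcal{B}$ of strict $m$-categories is essentially surjective if for every object $b$ of $\mathcal{B}$ there is an object $a$ of $\mathcal{A}$ and an equivalence $F(a)\to b$ (for $m=0$ this means surjective). *)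

theory Defs
  imports Main
begin

text \<open>Strict n-categories in the single-sorted (Street) presentation:
  a set of cells, source/target operators s_j, t_j and partial compositions #_j
  for j < n.  A j-cell (j < n) is a cell x with s_j x = x; every cell is an n-cell.
  Lower-dimensional cells are identified with their identities.
  Composition is diagrammatic: comp j x y is defined when tgt j x = src j y.\<close>

record 'a ncat =
  cells :: "'a set"
  src   :: "nat \<Rightarrow> 'a \<Rightarrow> 'a"
  tgt   :: "nat \<Rightarrow> 'a \<Rightarrow> 'a"
  comp  :: "nat \<Rightarrow> 'a \<Rightarrow> 'a \<Rightarrow> 'a"

definition strict_ncat :: "nat \<Rightarrow> 'a ncat \<Rightarrow> bool" where
  "strict_ncat n C \<longleftrightarrow>
     (\<forall>j<n. \<forall>x\<in>cells C. src C j x \<in> cells C \<and> tgt C j x \<in> cells C)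
   \<and> (\<forall>j<n. \<forall>x\<in>cells C. \<forall>y\<in>cells C. tgt C j x = src C j y \<longrightarrow> comp C j x y \<in> cells C)
   \<and> (\<forall>i<n. \<forall>j<n. \<forall>x\<in>cells C. i < j \<longrightarrow>
        src C i (src C j x) = src C i x \<and> src C i (tgt C j x) = src C i x \<and>
        tgt C i (src C j x) = tgt C i x \<and> tgt C i (tgt C j x) = tgt C i x)
   \<and> (\<forall>i<n. \<forall>j<n. \<forall>x\<in>cells C. j \<le> i \<longrightarrow>
        src C i (src C j x) = src C j x \<and> tgt C i (src C j x) = src C j x \<and>
        src C i (tgt C j x) = tgt C j x \<and> tgt C i (tgt C j x) = tgt C j x)
   \<and> (\<forall>j<n. \<forall>x\<in>cells C. \<forall>y\<in>cells C. tgt C j x = src C j y \<longrightarrow>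
        src C j (comp C j x y) = src C j x \<and> tgt C j (comp C j x y) = tgt C j y)
   \<and> (\<forall>i<n. \<forall>j<n. \<forall>x\<in>cells C. \<forall>y\<in>cells C. j < i \<longrightarrow> tgt C j x = src C j y \<longrightarrow>
        src C i (comp C j x y) = comp C j (src C i x) (src C i y) \<and>
        tgt C i (comp C j x y) = comp C j (tgt C i x) (tgt C i y))
   \<and> (\<forall>j<n. \<forall>x\<in>cells C. comp C j (src C j x) x = x \<and> comp C j x (tgt C j x) = x)
   \<and> (\<forall>j<n. \<forall>x\<in>cells C. \<forall>y\<in>cells C. \<forall>z\<in>cells C.
        tgt C j x = src C j y \<longrightarrow> tgt C j y = src C j z \<longrightarrow>
        comp C j (comp C j x y) z = comp C j x (comp C j y z))
   \<and> (\<forall>i<n. \<forall>j<n. \<forall>x\<in>cells C. \<forall>y\<in>cells C. \<forall>z\<in>cells C. \<forall>w\<in>cells C.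
        i < j \<longrightarrow> tgt C j x = src C j y \<longrightarrow> tgt C j z = src C j w \<longrightarrow>
        tgt C i x = src C i z \<longrightarrow>
        comp C i (comp C j x y) (comp C j z w) = comp C j (comp C i x z) (comp C i y w))"

definition is_cell :: "nat \<Rightarrow> 'a ncat \<Rightarrow> nat \<Rightarrow> 'a \<Rightarrow> bool" where
  "is_cell n C j x \<longleftrightarrow> x \<in> cells C \<and> (j < n \<longrightarrow> src C j x = x)"

text \<open>Equivalences, by descending recursion on the dimension: eqv_aux n C d j f,
  with d = n - j.  For j = n (d = 0) an equivalence is an isomorphism; otherwise
  f : x \<rightarrow> y is an equivalence if there is g : y \<rightarrow> x and equivalences
  f \<circ> g \<rightarrow> id_y and g \<circ> f \<rightarrow> id_x (identities of lower cells are the cells themselves,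
  and f \<circ> g is comp (j-1) g f in diagrammatic order).\<close>
fun eqv_aux :: "nat \<Rightarrow> 'a ncat \<Rightarrow> nat \<Rightarrow> nat \<Rightarrow> 'a \<Rightarrow> bool" where
  "eqv_aux n C 0 j f \<longleftrightarrow>
     (\<exists>g. is_cell n C j g \<and> src C (j-1) g = tgt C (j-1) f \<and> tgt C (j-1) g = src C (j-1) f \<and>
          comp C (j-1) f g = src C (j-1) f \<and> comp C (j-1) g f = tgt C (j-1) f)"
| "eqv_aux n C (Suc d) j f \<longleftrightarrow>
     (\<exists>g \<alpha> \<beta>. is_cell n C j g \<and> src C (j-1) g = tgt C (j-1) f \<and> tgt C (j-1) g = src C (j-1) f \<and>
          is_cell n C (j+1) \<alpha> \<and> src C j \<alpha> = comp C (j-1) g f \<and> tgt C j \<alpha> = tgt C (j-1) f \<and>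
          eqv_aux n C d (j+1) \<alpha> \<and>
          is_cell n C (j+1) \<beta> \<and> src C j \<beta> = comp C (j-1) f g \<and> tgt C j \<beta> = src C (j-1) f \<and>
          eqv_aux n C d (j+1) \<beta>)"

definition eqv :: "nat \<Rightarrow> 'a ncat \<Rightarrow> nat \<Rightarrow> 'a \<Rightarrow> bool" where
  "eqv n C j f \<longleftrightarrow> 1 \<le> j \<and> j \<le> n \<and> is_cell n C j f \<and> eqv_aux n C (n - j) j f"

definition hom :: "'a ncat \<Rightarrow> nat \<Rightarrow> 'a \<Rightarrow> 'a \<Rightarrow> 'a ncat" where
  "hom C k x y = \<lparr> cells = {c \<in> cells C. src C (k-1) c = x \<and> tgt C (k-1) c = y},
                   src = (\<lambda>j. src C (k+j)), tgt = (\<lambda>j. tgt C (k+j)),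
                   comp = (\<lambda>j. comp C (k+j)) \<rparr>"

definition ess_surj :: "nat \<Rightarrow> 'a ncat \<Rightarrow> 'a ncat \<Rightarrow> ('a \<Rightarrow> 'a) \<Rightarrow> bool" where
  "ess_surj m A B F \<longleftrightarrow>
     (if m = 0 then (\<forall>b\<in>cells B. \<exists>a\<in>cells A. F a = b)
      else (\<forall>b. is_cell m B 0 b \<longrightarrow>
              (\<exists>a e. is_cell m A 0 a \<and> is_cell m B 1 e \<and> src B 0 e = F a \<and> tgt B 0 e = b
                     \<and> eqv m B 1 e)))"

definition parallel :: "nat \<Rightarrow> 'a ncat \<Rightarrow> nat \<Rightarrow> 'a \<Rightarrow> 'a \<Rightarrow> bool" where
  "parallel n C k x y \<longleftrightarrow> is_cell n C (k-1) x \<and> is_cell n C (k-1) y \<and>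
     (2 \<le> k \<longrightarrow> src C (k-2) x = src C (k-2) y \<and> tgt C (k-2) x = tgt C (k-2) y)"

text \<open>whisk_fun n C k x y x' y' F: F : kHom(x,y) \<rightarrow> kHom(x',y') is a (nonempty) composite of
  functors given by composing (whiskering) with an invertible l-morphism h, 1 \<le> l \<le> k,
  along an (l-1)-morphism, on the left or on the right.\<close>
inductive whisk_fun :: "nat \<Rightarrow> 'a ncat \<Rightarrow> nat \<Rightarrow> 'a \<Rightarrow> 'a \<Rightarrow> 'a \<Rightarrow> 'a \<Rightarrow> ('a \<Rightarrow> 'a) \<Rightarrow> bool"
  for n C k where
  left: "\<lbrakk> 1 \<le> l; l \<le> k; eqv n C l h; parallel n C k x y; tgt C (l-1) h = src C (l-1) x \<rbrakk> \<Longrightarrow>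
     whisk_fun n C k x y
       (if l < k then comp C (l-1) h x else src C (k-1) h)
       (if l < k then comp C (l-1) h y else y)
       (\<lambda>c. comp C (l-1) h c)"
| right: "\<lbrakk> 1 \<le> l; l \<le> k; eqv n C l h; parallel n C k x y; tgt C (l-1) y = src C (l-1) h \<rbrakk> \<Longrightarrow>
     whisk_fun n C k x y
       (if l < k then comp C (l-1) x h else x)
       (if l < k then comp C (l-1) y h else tgt C (k-1) h)
       (\<lambda>c. comp C (l-1) c h)"
| compose: "\<lbrakk> whisk_fun n C k x y x' y' F; whisk_fun n C k x' y' x'' y'' G \<rbrakk> \<Longrightarrow>
     whisk_fun n C k x y x'' y'' (G \<circ> F)"

end

theory Submission
  imports Defs
begin


locale sc =
  fixes n :: nat and C :: "'a ncat"
  assumes S: "strict_ncat n C"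
begin

abbreviation "Cl \<equiv> cells C"
abbreviation s where "s \<equiv> src C"
abbreviation t where "t \<equiv> tgt C"
abbreviation c where "c \<equiv> comp C"

lemma AX0: "(\<forall>j<n. \<forall>x\<in>Cl. s j x \<in> Cl \<and> t j x \<in> Cl) \<and>
 (\<forall>j<n. \<forall>x\<in>Cl. \<forall>y\<in>Cl. t j x = s j y \<longrightarrow> c j x y \<in> Cl) \<and>
 (\<forall>i<n. \<forall>j<n. \<forall>x\<in>Cl. i < j \<longrightarrow>
        s i (s j x) = s i x \<and> s i (t j x) = s i x \<and>
        t i (s j x) = t i x \<and> t i (t j x) = t i x) \<and>
 (\<forall>i<n. \<forall>j<n. \<forall>x\<in>Cl. j \<le> i \<longrightarrow>
        s i (s j x) = s j x \<and> t i (s j x) = s j x \<and>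
        s i (t j x) = t j x \<and> t i (t j x) = t j x) \<and>
 (\<forall>j<n. \<forall>x\<in>Cl. \<forall>y\<in>Cl. t j x = s j y \<longrightarrow>
        s j (c j x y) = s j x \<and> t j (c j x y) = t j y) \<and>
 (\<forall>i<n. \<forall>j<n. \<forall>x\<in>Cl. \<forall>y\<in>Cl. j < i \<longrightarrow> t j x = s j y \<longrightarrow>
        s i (c j x y) = c j (s i x) (s i y) \<and>
        t i (c j x y) = c j (t i x) (t i y)) \<and>
 (\<forall>j<n. \<forall>x\<in>Cl. c j (s j x) x = x \<and> c j x (t j x) = x) \<and>
 (\<forall>j<n. \<forall>x\<in>Cl. \<forall>y\<in>Cl. \<forall>z\<in>Cl.
        t j x = s j y \<longrightarrow> t j y = s j z \<longrightarrow>
        c j (c j x y) z = c j x (c j y z)) \<and>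
 (\<forall>i<n. \<forall>j<n. \<forall>x\<in>Cl. \<forall>y\<in>Cl. \<forall>z\<in>Cl. \<forall>w\<in>Cl.
        i < j \<longrightarrow> t j x = s j y \<longrightarrow> t j z = s j w \<longrightarrow>
        t i x = s i z \<longrightarrow>
        c i (c j x y) (c j z w) = c j (c i x z) (c i y w))"
  using S unfolding strict_ncat_def .
lemmas AX = AX0[THEN conjunct1] AX0[THEN conjunct2, THEN conjunct1] AX0[THEN conjunct2, THEN conjunct2, THEN conjunct1] AX0[THEN conjunct2, THEN conjunct2, THEN conjunct2, THEN conjunct1] AX0[THEN conjunct2, THEN conjunct2, THEN conjunct2, THEN conjunct2, THEN conjunct1] AX0[THEN conjunct2, THEN conjunct2, THEN conjunct2, THEN conjunct2, THEN conjunct2, THEN conjunct1] AX0[THEN conjunct2, THEN conjunct2, THEN conjunct2, THEN conjunct2, THEN conjunct2, THEN conjunct2, THEN conjunct1] AX0[THEN conjunct2, THEN conjunct2, THEN conjunct2, THEN conjunct2, THEN conjunct2, THEN conjunct2, THEN conjunct2, THEN conjunct1] AX0[THEN conjunct2, THEN conjunct2, THEN conjunct2, THEN conjunct2, THEN conjunct2, THEN conjunct2, THEN conjunct2, THEN conjunct2]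


lemma s_cell[simp]: "j < n \<Longrightarrow> x \<in> Cl \<Longrightarrow> s j x \<in> Cl"
  using AX(1) by blast
lemma t_cell[simp]: "j < n \<Longrightarrow> x \<in> Cl \<Longrightarrow> t j x \<in> Cl"
  using AX(1) by blast
lemma c_cell[simp]: "j < n \<Longrightarrow> x \<in> Cl \<Longrightarrow> y \<in> Cl \<Longrightarrow> t j x = s j y \<Longrightarrow> c j x y \<in> Cl"
  using AX(2) by blast

lemma ss_lt[simp]: "i < j \<Longrightarrow> j < n \<Longrightarrow> x \<in> Cl \<Longrightarrow> s i (s j x) = s i x"
  using AX(3) by (meson order.strict_trans)
lemma st_lt[simp]: "i < j \<Longrightarrow> j < n \<Longrightarrow> x \<in> Cl \<Longrightarrow> s i (t j x) = s i x"
  using AX(3) by (meson order.strict_trans)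
lemma ts_lt[simp]: "i < j \<Longrightarrow> j < n \<Longrightarrow> x \<in> Cl \<Longrightarrow> t i (s j x) = t i x"
  using AX(3) by (meson order.strict_trans)
lemma tt_lt[simp]: "i < j \<Longrightarrow> j < n \<Longrightarrow> x \<in> Cl \<Longrightarrow> t i (t j x) = t i x"
  using AX(3) by (meson order.strict_trans)
lemma ss_ge[simp]: "j \<le> i \<Longrightarrow> i < n \<Longrightarrow> x \<in> Cl \<Longrightarrow> s i (s j x) = s j x"
  using AX(4) by (meson order.strict_trans1)
lemma ts_ge[simp]: "j \<le> i \<Longrightarrow> i < n \<Longrightarrow> x \<in> Cl \<Longrightarrow> t i (s j x) = s j x"
  using AX(4) by (meson order.strict_trans1)
lemma st_ge[simp]: "j \<le> i \<Longrightarrow> i < n \<Longrightarrow> x \<in> Cl \<Longrightarrow> s i (t j x) = t j x"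
  using AX(4) by (meson order.strict_trans1)
lemma tt_ge[simp]: "j \<le> i \<Longrightarrow> i < n \<Longrightarrow> x \<in> Cl \<Longrightarrow> t i (t j x) = t j x"
  using AX(4) by (meson order.strict_trans1)

lemma s_c_eq[simp]: "j < n \<Longrightarrow> x \<in> Cl \<Longrightarrow> y \<in> Cl \<Longrightarrow> t j x = s j y \<Longrightarrow> s j (c j x y) = s j x"
  using AX(5) by blast
lemma t_c_eq[simp]: "j < n \<Longrightarrow> x \<in> Cl \<Longrightarrow> y \<in> Cl \<Longrightarrow> t j x = s j y \<Longrightarrow> t j (c j x y) = t j y"
  using AX(5) by blast
lemma s_c_gt[simp]: "j < i \<Longrightarrow> i < n \<Longrightarrow> x \<in> Cl \<Longrightarrow> y \<in> Cl \<Longrightarrow> t j x = s j y \<Longrightarrow>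
   s i (c j x y) = c j (s i x) (s i y)"
  using AX(6) by (meson order.strict_trans)
lemma t_c_gt[simp]: "j < i \<Longrightarrow> i < n \<Longrightarrow> x \<in> Cl \<Longrightarrow> y \<in> Cl \<Longrightarrow> t j x = s j y \<Longrightarrow>
   t i (c j x y) = c j (t i x) (t i y)"
  using AX(6) by (meson order.strict_trans)
lemma s_c_lt[simp]: assumes a: "i < j" "j < n" "x \<in> Cl" "y \<in> Cl" "t j x = s j y" shows
   "s i (c j x y) = s i x"
proof -
  have "s i (s j (c j x y)) = s i (c j x y)" using a by (intro ss_lt) auto
  moreover have "s i (s j (c j x y)) = s i (s j x)" using a by simp
  moreover have "s i (s j x) = s i x" using a by simp
  ultimately show ?thesis by simp
qed
lemma t_c_lt[simp]: assumes a: "i < j" "j < n" "x \<in> Cl" "y \<in> Cl" "t j x = s j y" shows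
   "t i (c j x y) = t i y"
proof -
  have "t i (t j (c j x y)) = t i (c j x y)" using a by (intro tt_lt) auto
  moreover have "t i (t j (c j x y)) = t i (t j y)" using a by simp
  moreover have "t i (t j y) = t i y" using a by simp
  ultimately show ?thesis by simp
qed

lemma idl[simp]: "j < n \<Longrightarrow> x \<in> Cl \<Longrightarrow> a = s j x \<Longrightarrow> c j a x = x"
  using AX(7) by blast
lemma idr[simp]: "j < n \<Longrightarrow> x \<in> Cl \<Longrightarrow> a = t j x \<Longrightarrow> c j x a = x"
  using AX(7) by blast

lemma assoc: "j < n \<Longrightarrow> x \<in> Cl \<Longrightarrow> y \<in> Cl \<Longrightarrow> z \<in> Cl \<Longrightarrow> t j x = s j y \<Longrightarrow> t j y = s j z \<Longrightarrow>
  c j (c j x y) z = c j x (c j y z)"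
  using AX(8) by blast

lemma interchange: "i < j \<Longrightarrow> j < n \<Longrightarrow> x \<in> Cl \<Longrightarrow> y \<in> Cl \<Longrightarrow> z \<in> Cl \<Longrightarrow> w \<in> Cl \<Longrightarrow>
  t j x = s j y \<Longrightarrow> t j z = s j w \<Longrightarrow> t i x = s i z \<Longrightarrow>
  c i (c j x y) (c j z w) = c j (c i x z) (c i y w)"
  using AX(9) by (meson order.strict_trans)

lemma dim_s: "j < n \<Longrightarrow> s j x = x \<Longrightarrow> x \<in> Cl \<Longrightarrow> t j x = x"
  by (metis ts_ge order.refl)
lemma dim_t: "j < n \<Longrightarrow> t j x = x \<Longrightarrow> x \<in> Cl \<Longrightarrow> s j x = x"
  by (metis st_ge order.refl)
lemma dim_mono_s: "s j x = x \<Longrightarrow> j \<le> i \<Longrightarrow> i < n \<Longrightarrow> x \<in> Cl \<Longrightarrow> s i x = x"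
  by (metis ss_ge)
lemma dim_mono_t: "s j x = x \<Longrightarrow> j \<le> i \<Longrightarrow> i < n \<Longrightarrow> x \<in> Cl \<Longrightarrow> t i x = x"
  by (metis ts_ge)

lemma s_dim[simp]: "j < n \<Longrightarrow> x \<in> Cl \<Longrightarrow> s j (s j x) = s j x" by simp

lemma whisk_l: "i < j \<Longrightarrow> j < n \<Longrightarrow> s j h = h \<Longrightarrow> h \<in> Cl \<Longrightarrow> a \<in> Cl \<Longrightarrow> b \<in> Cl \<Longrightarrow>
  t j a = s j b \<Longrightarrow> t i h = s i a \<Longrightarrow> c i h (c j a b) = c j (c i h a) (c i h b)"
proof -
  assume a: "i < j" "j < n" "s j h = h" "h \<in> Cl" "a \<in> Cl" "b \<in> Cl" "t j a = s j b" "t i h = s i a"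
  have "c j h h = h" using a dim_s[of j h] by simp
  then show "c i h (c j a b) = c j (c i h a) (c i h b)" using interchange[of i j h h a b] a by (metis dim_s)
qed
lemma whisk_r: assumes a: "i < j" "j < n" "s j h = h" "h \<in> Cl" "a \<in> Cl" "b \<in> Cl" "t j a = s j b" "t i b = s i h"
  shows "c i (c j a b) h = c j (c i a h) (c i b h)"
proof -
  have "t i a = t i b" using a by (metis ts_lt tt_lt)
  moreover have "c j h h = h" using a dim_s[of j h] by simp
  ultimately show ?thesis using interchange[of i j a b h h] a by (metis dim_s)
qed



lemma lo_ss: "i < j \<Longrightarrow> j < n \<Longrightarrow> x \<in> Cl \<Longrightarrow> s j x = y \<Longrightarrow> s i x = s i y"
  by (metis ss_lt)
lemma lo_tt: "i < j \<Longrightarrow> j < n \<Longrightarrow> x \<in> Cl \<Longrightarrow> t j x = y \<Longrightarrow> t i x = t i y"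
  by (metis tt_lt)
lemma lo_st: "i < j \<Longrightarrow> j < n \<Longrightarrow> x \<in> Cl \<Longrightarrow> t j x = y \<Longrightarrow> s i x = s i y"
  by (metis st_lt)
lemma lo_ts: "i < j \<Longrightarrow> j < n \<Longrightarrow> x \<in> Cl \<Longrightarrow> s j x = y \<Longrightarrow> t i x = t i y"
  by (metis ts_lt)
lemma desc[consumes 1, case_names top step]:
  "j \<le> n \<Longrightarrow> P n \<Longrightarrow> (\<And>m. m < n \<Longrightarrow> P (Suc m) \<Longrightarrow> P m) \<Longrightarrow> P j"
  by (induction rule: inc_induct) auto

abbreviation E where "E j f \<equiv> eqv n C j f"

lemma E_top: "E n f \<longleftrightarrow> 1 \<le> n \<and> f \<in> Cl \<and> (\<exists>g. g \<in> Cl \<and> s (n-1) g = t (n-1) f \<and> t (n-1) g = s (n-1) f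
   \<and> c (n-1) f g = s (n-1) f \<and> c (n-1) g f = t (n-1) f)"
  by (auto simp: eqv_def is_cell_def)

lemma E_step: "j < n \<Longrightarrow> E j f \<longleftrightarrow> 1 \<le> j \<and> f \<in> Cl \<and> s j f = f \<and>
  (\<exists>g a b. g \<in> Cl \<and> s j g = g \<and> s (j-1) g = t (j-1) f \<and> t (j-1) g = s (j-1) f \<and>
     s j a = c (j-1) g f \<and> t j a = t (j-1) f \<and> E (Suc j) a \<and>
     s j b = c (j-1) f g \<and> t j b = s (j-1) f \<and> E (Suc j) b)"
proof -
  assume j: "j < n"
  then have nj: "n - j = Suc (n - Suc j)" by simp
  have L: "E j f \<longleftrightarrow> 1 \<le> j \<and> is_cell n C j f \<and> eqv_aux n C (Suc (n - Suc j)) j f"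
    using j by (simp add: eqv_def nj del: eqv_aux.simps)
  have R: "\<And>a. E (Suc j) a \<longleftrightarrow> is_cell n C (j+1) a \<and> eqv_aux n C (n - Suc j) (j+1) a"
    using j by (simp add: eqv_def del: eqv_aux.simps)
  have I: "\<And>g. is_cell n C j g \<longleftrightarrow> g \<in> Cl \<and> s j g = g" using j by (simp add: is_cell_def)
  show ?thesis unfolding L eqv_aux.simps(2) R I by blast
qed

lemma E_cell: "E j f \<Longrightarrow> f \<in> Cl" unfolding eqv_def is_cell_def by auto
lemma E_dim: "E j f \<Longrightarrow> j < n \<Longrightarrow> s j f = f" unfolding eqv_def is_cell_def by auto
lemma E_ge1: "E j f \<Longrightarrow> 1 \<le> j" unfolding eqv_def by auto
lemma E_le: "E j f \<Longrightarrow> j \<le> n" unfolding eqv_def by auto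

lemma E_inv: assumes "E j f"
  shows "\<exists>g. E j g \<and> s (j-1) g = t (j-1) f \<and> t (j-1) g = s (j-1) f \<and>
     (j < n \<longrightarrow> (\<exists>a b. s j a = c (j-1) g f \<and> t j a = t (j-1) f \<and> E (Suc j) a \<and>
                 s j b = c (j-1) f g \<and> t j b = s (j-1) f \<and> E (Suc j) b)) \<and>
     (j = n \<longrightarrow> c (j-1) f g = s (j-1) f \<and> c (j-1) g f = t (j-1) f)"
proof (cases "j < n")
  case True
  then obtain g a b where w: "g \<in> Cl \<and> s j g = g \<and> s (j-1) g = t (j-1) f \<and> t (j-1) g = s (j-1) f \<and>
     s j a = c (j-1) g f \<and> t j a = t (j-1) f \<and> E (Suc j) a \<and>
     s j b = c (j-1) f g \<and> t j b = s (j-1) f \<and> E (Suc j) b" using assms E_step by blast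
  have f: "1 \<le> j" "f \<in> Cl" "s j f = f" using assms E_step[OF True] by auto
  have "1 \<le> j \<and> g \<in> Cl \<and> s j g = g \<and> (f \<in> Cl \<and> s j f = f \<and> s (j-1) f = t (j-1) g \<and> t (j-1) f = s (j-1) g \<and>
     s j b = c (j-1) f g \<and> t j b = t (j-1) g \<and> E (Suc j) b \<and> s j a = c (j-1) g f \<and> t j a = s (j-1) g \<and> E (Suc j) a)"
    using w f by auto
  then have "E j g" unfolding E_step[OF True, of g] by blast
  then show ?thesis using w True by blast
next
  case False
  then have jn: "j = n" using E_le assms by fastforce
  then obtain g where g: "g \<in> Cl \<and> s (n-1) g = t (n-1) f \<and> t (n-1) g = s (n-1) f
   \<and> c (n-1) f g = s (n-1) f \<and> c (n-1) g f = t (n-1) f" using assms E_top by blast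
  have f: "1 \<le> n" "f \<in> Cl" using assms E_top jn by auto
  have "E n g" unfolding E_top using g f by auto
  then show ?thesis using g jn by auto
qed


lemma W_l: assumes "j \<le> n"
  shows "E j f \<Longrightarrow> i + 1 < j \<Longrightarrow> h \<in> Cl \<Longrightarrow> s (j-1) h = h \<Longrightarrow> t i h = s i f \<Longrightarrow> E j (c i h f)"
  using assms
proof (induction j arbitrary: f h rule: desc)
  case top
  obtain g where g: "g \<in> Cl" "s (n-1) g = t (n-1) f" "t (n-1) g = s (n-1) f"
     "c (n-1) f g = s (n-1) f" "c (n-1) g f = t (n-1) f" using top.prems(1) E_top by blast
  have f: "f \<in> Cl" "1 \<le> n" using top.prems(1) E_top by auto
  have i: "i < n - 1" "n - 1 < n" using top.prems(2) by auto
  have th: "t (n-1) h = h" using dim_s[of "n-1" h] top.prems i by simp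
  have sg: "s i g = s i f" using lo_ss[of i "n-1" g "t (n-1) f"] i g f by simp
  have hf: "c i h f \<in> Cl" using top.prems i f by simp
  have hg: "c i h g \<in> Cl" using top.prems i g sg by simp
  have 1: "s (n-1) (c i h g) = t (n-1) (c i h f)" using top.prems i g f sg th by simp
  have 2: "t (n-1) (c i h g) = s (n-1) (c i h f)" using top.prems i g f sg th by simp
  have "c (n-1) (c i h f) (c i h g) = c i h (c (n-1) f g)"
    using top.prems i g f by (intro whisk_l[of i "n-1" h f g, symmetric]) simp_all
  then have 3: "c (n-1) (c i h f) (c i h g) = s (n-1) (c i h f)" using top.prems i g f by simp
  have "c (n-1) (c i h g) (c i h f) = c i h (c (n-1) g f)"
    using top.prems i g f sg by (intro whisk_l[of i "n-1" h g f, symmetric]) simp_all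
  then have 4: "c (n-1) (c i h g) (c i h f) = t (n-1) (c i h f)" using top.prems i g f th by simp
  show ?case unfolding E_top using f hf hg 1 2 3 4 by blast
next
  case (step m)
  have m: "m < n" "i < m - 1" "m - 1 < n" "i < m" "1 \<le> m" using step.hyps step.prems by auto
  obtain g a b where w: "g \<in> Cl" "s m g = g" "s (m-1) g = t (m-1) f" "t (m-1) g = s (m-1) f"
     "s m a = c (m-1) g f" "t m a = t (m-1) f" "E (Suc m) a"
     "s m b = c (m-1) f g" "t m b = s (m-1) f" "E (Suc m) b" using step.prems(1) E_step[OF m(1)] by blast
  have f: "f \<in> Cl" "s m f = f" using step.prems(1) E_step[OF m(1)] by auto
  have ab: "a \<in> Cl" "b \<in> Cl" using w E_cell by auto
  have th: "t (m-1) h = h" using dim_s[of "m-1" h] step.prems m by simp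
  have sh: "s m h = h" "t m h = h" using dim_mono_s[of "m-1" h m] dim_mono_t[of "m-1" h m] step.prems m by auto
  have sg: "s i g = s i f" using lo_ss[of i "m-1" g "t (m-1) f"] m w f by simp
  have sa: "s i a = s i f" using lo_ss[of i m a "c (m-1) g f"] m w f ab sg by simp
  have sb: "s i b = s i f" using lo_ss[of i m b "c (m-1) f g"] m w f ab sg by simp
  have hf: "c i h f \<in> Cl" using step.prems m f by simp
  have hg: "c i h g \<in> Cl" using step.prems m w sg by simp
  have 1: "s m (c i h f) = c i h f" "s m (c i h g) = c i h g" using step.prems m f w sg sh by simp_all
  have 2: "s (m-1) (c i h g) = t (m-1) (c i h f)" "t (m-1) (c i h g) = s (m-1) (c i h f)"
    using step.prems m w f sg th by simp_all
  have "s m (c i h a) = c i h (c (m-1) g f)" using step.prems m w ab sa sh by simp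
  also have "\<dots> = c (m-1) (c i h g) (c i h f)"
    using step.prems m w f sg by (intro whisk_l[of i "m-1" h g f]) simp_all
  finally have 3: "s m (c i h a) = c (m-1) (c i h g) (c i h f)" .
  have 4: "t m (c i h a) = t (m-1) (c i h f)" using step.prems m w ab sa sh f th by simp
  have 5: "E (Suc m) (c i h a)" using step.IH[of a h] step.prems m w ab sa sh by simp
  have "s m (c i h b) = c i h (c (m-1) f g)" using step.prems m w ab sb sh by simp
  also have "\<dots> = c (m-1) (c i h f) (c i h g)"
    using step.prems m w f sg by (intro whisk_l[of i "m-1" h f g]) simp_all
  finally have 6: "s m (c i h b) = c (m-1) (c i h f) (c i h g)" .
  have 7: "t m (c i h b) = s (m-1) (c i h f)" using step.prems m w ab sb sh f th by simp
  have 8: "E (Suc m) (c i h b)" using step.IH[of b h] step.prems m w ab sb sh by simp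
  show ?case unfolding E_step[OF m(1)] using m hf hg 1 2 3 4 5 6 7 8 by blast
qed

lemma W_r: assumes "j \<le> n"
  shows "E j f \<Longrightarrow> i + 1 < j \<Longrightarrow> h \<in> Cl \<Longrightarrow> s (j-1) h = h \<Longrightarrow> t i f = s i h \<Longrightarrow> E j (c i f h)"
  using assms
proof (induction j arbitrary: f h rule: desc)
  case top
  obtain g where g: "g \<in> Cl" "s (n-1) g = t (n-1) f" "t (n-1) g = s (n-1) f"
     "c (n-1) f g = s (n-1) f" "c (n-1) g f = t (n-1) f" using top.prems(1) E_top by blast
  have f: "f \<in> Cl" "1 \<le> n" using top.prems(1) E_top by auto
  have i: "i < n - 1" "n - 1 < n" using top.prems(2) by auto
  have th: "t (n-1) h = h" using dim_s[of "n-1" h] top.prems i by simp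
  have sg: "t i g = t i f" using lo_tt[of i "n-1" g "s (n-1) f"] i g f by simp
  have hf: "c i f h \<in> Cl" using top.prems i f by simp
  have hg: "c i g h \<in> Cl" using top.prems i g sg by simp
  have 1: "s (n-1) (c i g h) = t (n-1) (c i f h)" using top.prems i g f sg th by simp
  have 2: "t (n-1) (c i g h) = s (n-1) (c i f h)" using top.prems i g f sg th by simp
  have "c (n-1) (c i f h) (c i g h) = c i (c (n-1) f g) h"
    using top.prems i g f sg by (intro whisk_r[of i "n-1" h f g, symmetric]) simp_all
  then have 3: "c (n-1) (c i f h) (c i g h) = s (n-1) (c i f h)" using top.prems i g f th by simp
  have "c (n-1) (c i g h) (c i f h) = c i (c (n-1) g f) h"
    using top.prems i g f sg by (intro whisk_r[of i "n-1" h g f, symmetric]) simp_all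
  then have 4: "c (n-1) (c i g h) (c i f h) = t (n-1) (c i f h)" using top.prems i g f th by simp
  show ?case unfolding E_top using f hf hg 1 2 3 4 by blast
next
  case (step m)
  have m: "m < n" "i < m - 1" "m - 1 < n" "i < m" "1 \<le> m" using step.hyps step.prems by auto
  obtain g a b where w: "g \<in> Cl" "s m g = g" "s (m-1) g = t (m-1) f" "t (m-1) g = s (m-1) f"
     "s m a = c (m-1) g f" "t m a = t (m-1) f" "E (Suc m) a"
     "s m b = c (m-1) f g" "t m b = s (m-1) f" "E (Suc m) b" using step.prems(1) E_step[OF m(1)] by blast
  have f: "f \<in> Cl" "s m f = f" using step.prems(1) E_step[OF m(1)] by auto
  have ab: "a \<in> Cl" "b \<in> Cl" using w E_cell by auto
  have th: "t (m-1) h = h" using dim_s[of "m-1" h] step.prems m by simp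
  have sh: "s m h = h" "t m h = h" using dim_mono_s[of "m-1" h m] dim_mono_t[of "m-1" h m] step.prems m by auto
  have sg: "t i g = t i f" using lo_tt[of i "m-1" g "s (m-1) f"] m w f by simp
  have sa: "t i a = t i f" using lo_tt[of i m a "t (m-1) f"] m w f ab sg by simp
  have sb: "t i b = t i f" using lo_tt[of i m b "s (m-1) f"] m w f ab sg by simp
  have hf: "c i f h \<in> Cl" using step.prems m f by simp
  have hg: "c i g h \<in> Cl" using step.prems m w sg by simp
  have 1: "s m (c i f h) = c i f h" "s m (c i g h) = c i g h" using step.prems m f w sg sh by simp_all
  have 2: "s (m-1) (c i g h) = t (m-1) (c i f h)" "t (m-1) (c i g h) = s (m-1) (c i f h)"
    using step.prems m w f sg th by simp_all
  have "s m (c i a h) = c i (c (m-1) g f) h" using step.prems m w ab sa sh by simp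
  also have "\<dots> = c (m-1) (c i g h) (c i f h)"
    using step.prems m w f sg by (intro whisk_r[of i "m-1" h g f]) simp_all
  finally have 3: "s m (c i a h) = c (m-1) (c i g h) (c i f h)" .
  have 4: "t m (c i a h) = t (m-1) (c i f h)" using step.prems m w ab sa sh f th by simp
  have 5: "E (Suc m) (c i a h)" using step.IH[of a h] step.prems m w ab sa sh by simp
  have "s m (c i b h) = c i (c (m-1) f g) h" using step.prems m w ab sb sh by simp
  also have "\<dots> = c (m-1) (c i f h) (c i g h)"
    using step.prems m w f sg by (intro whisk_r[of i "m-1" h f g]) simp_all
  finally have 6: "s m (c i b h) = c (m-1) (c i f h) (c i g h)" .
  have 7: "t m (c i b h) = s (m-1) (c i f h)" using step.prems m w ab sb sh f th by simp
  have 8: "E (Suc m) (c i b h)" using step.IH[of b h] step.prems m w ab sb sh by simp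
  show ?case unfolding E_step[OF m(1)] using m hf hg 1 2 3 4 5 6 7 8 by blast
qed

lemma T: assumes "j \<le> n"
  shows "E j f \<Longrightarrow> E j f' \<Longrightarrow> t (j-1) f = s (j-1) f' \<Longrightarrow> E j (c (j-1) f f')"
  using assms
proof (induction j arbitrary: f f' rule: desc)
  case top
  define p where "p = n - 1"
  have p: "p < n" "1 \<le> n" using top.prems(1) E_top p_def by auto
  obtain g where g: "g \<in> Cl" "s p g = t p f" "t p g = s p f"
     "c p f g = s p f" "c p g f = t p f" using top.prems(1) E_top p_def by blast
  obtain g' where g': "g' \<in> Cl" "s p g' = t p f'" "t p g' = s p f'"
     "c p f' g' = s p f'" "c p g' f' = t p f'" using top.prems(2) E_top p_def by blast
  have f: "f \<in> Cl" "f' \<in> Cl" "t p f = s p f'" using top.prems(3) E_cell[OF top.prems(1)] E_cell[OF top.prems(2)] p_def by auto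
  have F: "c p f f' \<in> Cl" using f p by simp
  have G: "c p g' g \<in> Cl" using f p g g' by simp
  have 1: "s p (c p g' g) = t p (c p f f')" "t p (c p g' g) = s p (c p f f')" using f p g g' by simp_all
  have "c p (c p f f') (c p g' g) = c p (c p f (c p f' g')) g" using f p g(1,2,3) g'(1,2,3) by (simp add: assoc)
  also have "\<dots> = s p (c p f f')" using f p g g' by simp
  finally have 2: "c p (c p f f') (c p g' g) = s p (c p f f')" .
  have "c p (c p g' g) (c p f f') = c p (c p g' (c p g f)) f'" using f p g(1,2,3) g'(1,2,3) by (simp add: assoc)
  also have "\<dots> = t p (c p f f')" using f p g g' by simp
  finally have 3: "c p (c p g' g) (c p f f') = t p (c p f f')" .
  show ?case unfolding E_top p_def[symmetric] using p F G 1 2 3 by blast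
next
  case (step m)
  define p where "p = m - 1"
  have m0: "1 \<le> m" using E_ge1[OF step.prems(1)] .
  have m: "m < n" "p < m" "p < n" using step.hyps m0 p_def by auto
  have m2: "1 \<le> m" "Suc m \<le> n" using step.hyps m0 by auto
  have mp: "Suc p = m" using m0 p_def by auto
  obtain g a b where w: "g \<in> Cl" "s m g = g" "s p g = t p f" "t p g = s p f"
     "s m a = c p g f" "t m a = t p f" "E (Suc m) a"
     "s m b = c p f g" "t m b = s p f" "E (Suc m) b" using step.prems(1) E_step[OF m(1)] p_def by blast
  obtain g' a' b' where w': "g' \<in> Cl" "s m g' = g'" "s p g' = t p f'" "t p g' = s p f'"
     "s m a' = c p g' f'" "t m a' = t p f'" "E (Suc m) a'"
     "s m b' = c p f' g'" "t m b' = s p f'" "E (Suc m) b'" using step.prems(2) E_step[OF m(1)] p_def by blast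
  note wE = w(7,10) and w'E = w'(7,10)
  note w = w(1-6,8,9) and w' = w'(1-6,8,9)
  have f: "f \<in> Cl" "s m f = f" "f' \<in> Cl" "s m f' = f'" "t p f = s p f'"
    using E_cell[OF step.prems(1)] E_cell[OF step.prems(2)] E_dim[OF step.prems(1) m(1)] E_dim[OF step.prems(2) m(1)] step.prems(3) p_def by auto
  have ab: "a \<in> Cl" "b \<in> Cl" "a' \<in> Cl" "b' \<in> Cl" using wE w'E E_cell by auto
  have tm: "t m f = f" "t m f' = f'" "t m g = g" "t m g' = g'" using dim_s[of m f] dim_s[of m f'] dim_s[of m g] dim_s[of m g'] m f w w' by auto
  have F: "c p f f' \<in> Cl" using f m by simp
  have G: "c p g' g \<in> Cl" using f m w w' by simp
  have 1: "s m (c p f f') = c p f f'" "s m (c p g' g) = c p g' g" using f m w w' by simp_all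
  have 2: "s p (c p g' g) = t p (c p f f')" "t p (c p g' g) = s p (c p f f')" using f m w w' by simp_all
  
  have sa: "s p a = t p f" using lo_ss[of p m a "c p g f"] m w ab f by simp
  have ta: "t p a = t p f" using lo_tt[of p m a "t p f"] m w ab f by simp
  have sb: "s p b = s p f" using lo_ss[of p m b "c p f g"] m w ab f by simp
  have tb: "t p b = s p f" using lo_tt[of p m b "s p f"] m w ab f by simp
  have sa': "s p a' = t p f'" using lo_ss[of p m a' "c p g' f'"] m w' ab f by simp
  have sb': "s p b' = s p f'" using lo_ss[of p m b' "c p f' g'"] m w' ab f by simp
  have tb': "t p b' = s p f'" using lo_tt[of p m b' "s p f'"] m w' ab f by simp
  have ga: "c p g' a \<in> Cl" using m w w' ab sa f by simp
  have Ega: "E (Suc m) (c p g' a)" using m m2 w w' wE ab sa f by (intro W_l[of "Suc m" a p g']) simp_all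
  have a1: "c p (c p g' a) f' \<in> Cl" using m w w' ab sa ta f by simp
  have Ea1: "E (Suc m) (c p (c p g' a) f')" using Ega m m2 w w' ab sa ta f by (intro W_r[of "Suc m" "c p g' a" p f']) simp_all
  have "s m (c p (c p g' a) f') = c p (c p g' (c p g f)) f'" using m w w' ab sa ta f tm by simp
  also have "\<dots> = c p (c p g' g) (c p f f')" using m w w' f by (simp add: assoc)
  finally have sa1: "s m (c p (c p g' a) f') = c p (c p g' g) (c p f f')" .
  have ta1: "t m (c p (c p g' a) f') = s m a'" using m w w' ab sa ta f tm by simp
  have A: "E (Suc m) (c m (c p (c p g' a) f') a')" using step.IH[OF Ea1 w'E(1)] ta1 m by simp
  have sA: "s m (c m (c p (c p g' a) f') a') = c p (c p g' g) (c p f f')" using sa1 ta1 a1 ab m by simp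
  have tA: "t m (c m (c p (c p g' a) f') a') = t p (c p f f')" using ta1 a1 ab m w' f by simp
  
  have fb: "c p f b' \<in> Cl" using m w w' ab sb' f by simp
  have Efb: "E (Suc m) (c p f b')" using m m2 w w' w'E ab sb' f by (intro W_l[of "Suc m" b' p f]) simp_all
  have b1: "c p (c p f b') g \<in> Cl" using m w w' ab sb' tb' f by simp
  have Eb1: "E (Suc m) (c p (c p f b') g)" using Efb m m2 w w' ab sb' tb' f by (intro W_r[of "Suc m" "c p f b'" p g]) simp_all
  have "s m (c p (c p f b') g) = c p (c p f (c p f' g')) g" using m w w' ab sb' tb' f tm by simp
  also have "\<dots> = c p (c p f f') (c p g' g)" using m w w' f by (simp add: assoc)
  finally have sb1: "s m (c p (c p f b') g) = c p (c p f f') (c p g' g)" .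
  have tb1: "t m (c p (c p f b') g) = s m b" using m w w' ab sb' tb' f tm by simp
  have B: "E (Suc m) (c m (c p (c p f b') g) b)" using step.IH[OF Eb1 wE(2)] tb1 m by simp
  have sB: "s m (c m (c p (c p f b') g) b) = c p (c p f f') (c p g' g)" using sb1 tb1 b1 ab m by simp
  have tB: "t m (c m (c p (c p f b') g) b) = s p (c p f f')" using tb1 b1 ab m w f by simp
  show ?case unfolding E_step[OF m(1)] p_def[symmetric] using m m2 F G 1 2 A sA tA B sB tB by blast
qed



definition hm :: "nat \<Rightarrow> 'a \<Rightarrow> 'a \<Rightarrow> 'a set" where
  "hm k x y = {a \<in> Cl. s (k-1) a = x \<and> t (k-1) a = y}"
definition ws :: "bool \<Rightarrow> nat \<Rightarrow> 'a \<Rightarrow> 'a \<Rightarrow> 'a" where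
  "ws lf i h a = (if lf then c i h a else c i a h)"
definition wsrc where "wsrc lf i h k x = (if i+1 < k then ws lf i h x else if lf then s i h else x)"
definition wtgt where "wtgt lf i h k y = (if i+1 < k then ws lf i h y else if lf then y else t i h)"
definition par where "par k x y \<longleftrightarrow> x \<in> Cl \<and> y \<in> Cl \<and> s (k-1) x = x \<and> s (k-1) y = y \<and>
   (2 \<le> k \<longrightarrow> s (k-2) x = s (k-2) y \<and> t (k-2) x = t (k-2) y)"
definition wk where "wk lf i h a \<longleftrightarrow> (if lf then t i h = s i a else t i a = s i h)"
definition dm where "dm lf i h k x y \<longleftrightarrow> par k x y \<and> (if lf then wk lf i h x else wk lf i h y)"
definition hdim where "hdim i h \<longleftrightarrow> h \<in> Cl \<and> (i+1 < n \<longrightarrow> s (i+1) h = h)"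

lemma lo_eq_t: "i < j \<Longrightarrow> j < n \<Longrightarrow> x \<in> Cl \<Longrightarrow> y \<in> Cl \<Longrightarrow> t j x = t j y \<Longrightarrow> t i x = t i y"
  by (metis tt_lt)
lemma lo_eq_s: "i < j \<Longrightarrow> j < n \<Longrightarrow> x \<in> Cl \<Longrightarrow> y \<in> Cl \<Longrightarrow> s j x = s j y \<Longrightarrow> s i x = s i y"
  by (metis ss_lt)

lemma hd_s: assumes "hdim i h" "i < j" "j < n" shows "s j h = h"
proof -
  have "s (i+1) h = h" "h \<in> Cl" using assms unfolding hdim_def by auto
  then show ?thesis using dim_mono_s[of "i+1" h j] assms(2,3) by simp
qed
lemma hd_t: assumes "hdim i h" "i < j" "j < n" shows "t j h = h"
proof -
  have "h \<in> Cl" using assms unfolding hdim_def by auto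
  then show ?thesis using hd_s[OF assms] dim_s[of j h] assms(3) by simp
qed

lemma ws_cell: "i < n \<Longrightarrow> h \<in> Cl \<Longrightarrow> a \<in> Cl \<Longrightarrow> wk lf i h a \<Longrightarrow> ws lf i h a \<in> Cl"
  unfolding ws_def wk_def by (cases lf) auto

lemma ws_s: "hdim i h \<Longrightarrow> i < j \<Longrightarrow> j < n \<Longrightarrow> a \<in> Cl \<Longrightarrow> wk lf i h a \<Longrightarrow> s j (ws lf i h a) = ws lf i h (s j a)"
  unfolding ws_def wk_def using hd_s[of i h j] hdim_def by (cases lf) auto
lemma ws_t: "hdim i h \<Longrightarrow> i < j \<Longrightarrow> j < n \<Longrightarrow> a \<in> Cl \<Longrightarrow> wk lf i h a \<Longrightarrow> t j (ws lf i h a) = ws lf i h (t j a)"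
  unfolding ws_def wk_def using hd_s[of i h j] hd_t[of i h j] hdim_def by (cases lf) auto

lemma wk_s: "i < j \<Longrightarrow> j < n \<Longrightarrow> a \<in> Cl \<Longrightarrow> wk lf i h a \<Longrightarrow> wk lf i h (s j a)"
  unfolding wk_def by (cases lf) auto
lemma wk_t: "i < j \<Longrightarrow> j < n \<Longrightarrow> a \<in> Cl \<Longrightarrow> wk lf i h a \<Longrightarrow> wk lf i h (t j a)"
  unfolding wk_def by (cases lf) auto
lemma wk_c2: "i < j \<Longrightarrow> j < n \<Longrightarrow> a \<in> Cl \<Longrightarrow> b \<in> Cl \<Longrightarrow> t j a = s j b \<Longrightarrow> wk lf i h a \<Longrightarrow> wk lf i h b"
proof -
  assume a: "i < j" "j < n" "a \<in> Cl" "b \<in> Cl" "t j a = s j b" "wk lf i h a"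
  have "s i a = s i b" using lo_st[of i j a "s j b"] a by simp
  moreover have "t i a = t i b" using lo_tt[of i j a "s j b"] a by simp
  ultimately show ?thesis using a(6) unfolding wk_def by (cases lf) auto
qed
lemma wk_c: "i < j \<Longrightarrow> j < n \<Longrightarrow> a \<in> Cl \<Longrightarrow> b \<in> Cl \<Longrightarrow> t j a = s j b \<Longrightarrow> wk lf i h a \<Longrightarrow> wk lf i h (c j a b)"
  using wk_c2[of i j a b lf h] unfolding wk_def by (cases lf) auto

lemma ws_func: "hdim i h \<Longrightarrow> i < j \<Longrightarrow> j < n \<Longrightarrow> a \<in> Cl \<Longrightarrow> b \<in> Cl \<Longrightarrow> t j a = s j b \<Longrightarrow> wk lf i h a \<Longrightarrow>
   ws lf i h (c j a b) = c j (ws lf i h a) (ws lf i h b)"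
proof -
  assume a: "hdim i h" "i < j" "j < n" "a \<in> Cl" "b \<in> Cl" "t j a = s j b" "wk lf i h a"
  have b: "wk lf i h b" using wk_c2 a(2-7) .
  have h: "h \<in> Cl" "s j h = h" using a(1) hd_s[OF a(1-3)] unfolding hdim_def by auto
  show ?thesis
  proof (cases lf)
    case True
    then have "t i h = s i a" using a(7) unfolding wk_def by simp
    then have "c i h (c j a b) = c j (c i h a) (c i h b)" using whisk_l[OF a(2,3) h(2,1) a(4,5,6)] by blast
    then show ?thesis using True unfolding ws_def by simp
  next
    case False
    then have "t i b = s i h" using b unfolding wk_def by simp
    then have "c i (c j a b) h = c j (c i a h) (c i b h)" using whisk_r[OF a(2,3) h(2,1) a(4,5,6)] by blast
    then show ?thesis using False unfolding ws_def by simp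
  qed
qed

lemma par_lo: assumes "par k x y" "i + 1 < k" "k \<le> n"
  shows "s i x = s i y" "t i x = t i y"
proof -
  have k2: "2 \<le> k" "i \<le> k - 2" "k - 2 < n" using assms(2,3) by auto
  have p: "x \<in> Cl" "y \<in> Cl" using assms(1) unfolding par_def by auto
  have e: "s (k-2) x = s (k-2) y" "t (k-2) x = t (k-2) y" using assms(1) k2(1) unfolding par_def by auto
  show "t i x = t i y"
  proof (cases "i = k-2")
    case True then show ?thesis using e by simp
  next
    case False
    then have "i < k-2" using k2 by simp
    then show ?thesis using lo_eq_t[of i "k-2" x y] e k2 p by blast
  qed
  show "s i x = s i y"
  proof (cases "i = k-2")
    case True then show ?thesis using e by simp
  next
    case False
    then have "i < k-2" using k2 by simp
    then show ?thesis using lo_eq_s[of i "k-2" x y] e k2 p by blast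
  qed
qed

lemma dm_wk: assumes "dm lf i h k x y" "i + 1 < k" "k \<le> n" shows "wk lf i h x" "wk lf i h y"
proof -
  have "s i x = s i y" "t i x = t i y" using par_lo assms dm_def by auto
  then show "wk lf i h x" "wk lf i h y" using assms(1) unfolding dm_def wk_def by (cases lf; auto)+
qed

lemma hm_wk: assumes "dm lf i h k x y" "a \<in> hm k x y" "i + 1 \<le> k" "k \<le> n" shows "wk lf i h a"
proof -
  have p: "x \<in> Cl" "y \<in> Cl" "s (k-1) x = x" "s (k-1) y = y"
    using assms(1) unfolding dm_def par_def by auto
  have w: "if lf then wk lf i h x else wk lf i h y" using assms(1) unfolding dm_def by auto
  have a: "a \<in> Cl" "s (k-1) a = x" "t (k-1) a = y" using assms(2) unfolding hm_def by auto
  show ?thesis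
  proof (cases "i + 1 = k")
    case True
    then have "s i a = x" "t i a = y" "s i x = x" "t i y = y" using a p dim_s[of i y] assms(4) by auto
    then show ?thesis using w unfolding wk_def by (cases lf) auto
  next
    case False
    then have "i < k - 1" "k - 1 < n" using assms(3,4) by auto
    then have "s i a = s i x" "t i a = t i y" using lo_ss[of i "k-1" a x] lo_tt[of i "k-1" a y] a by auto
    then show ?thesis using w unfolding wk_def by (cases lf) auto
  qed
qed

lemma hm_cell: "a \<in> hm k x y \<Longrightarrow> a \<in> Cl" unfolding hm_def by auto

lemma ws_hm: assumes "dm lf i h k x y" "hdim i h" "a \<in> hm k x y" "i+1 \<le> k" "k \<le> n"
  shows "ws lf i h a \<in> hm k (wsrc lf i h k x) (wtgt lf i h k y)"
proof -
  have w: "wk lf i h a" using hm_wk assms(1,3,4,5) .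
  have a: "a \<in> Cl" "s (k-1) a = x" "t (k-1) a = y" using assms(3) unfolding hm_def by auto
  have h: "h \<in> Cl" using assms(2) unfolding hdim_def by auto
  have c: "ws lf i h a \<in> Cl" using ws_cell[of i h a lf] assms(4,5) a h w by simp
  show ?thesis
  proof (cases "i + 1 < k")
    case True
    then have "s (k-1) (ws lf i h a) = ws lf i h x" "t (k-1) (ws lf i h a) = ws lf i h y"
      using ws_s[OF assms(2), of "k-1" a lf] ws_t[OF assms(2), of "k-1" a lf] a w assms(5) by auto
    then show ?thesis using c True unfolding hm_def wsrc_def wtgt_def by simp
  next
    case False
    then have k: "k = i + 1" "i < n" using assms(4,5) by auto
    show ?thesis
    proof (cases lf)
      case True
      then have "t i h = s i a" using w unfolding wk_def by simp
      then have "s i (c i h a) = s i h" "t i (c i h a) = t i a" using a h k by simp_all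
      then show ?thesis using c True k a unfolding hm_def wsrc_def wtgt_def ws_def by simp
    next
      case False
      then have "t i a = s i h" using w unfolding wk_def by simp
      then have "s i (c i a h) = s i a" "t i (c i a h) = t i h" using a h k by simp_all
      then show ?thesis using c False k a unfolding hm_def wsrc_def wtgt_def ws_def by simp
    qed
  qed
qed

lemma ws_dim: "hdim i h \<Longrightarrow> i < k \<Longrightarrow> k < n \<Longrightarrow> a \<in> Cl \<Longrightarrow> wk lf i h a \<Longrightarrow> s k a = a \<Longrightarrow> s k (ws lf i h a) = ws lf i h a"
  using ws_s by metis

lemma par_ws: assumes "dm lf i h k x y" "hdim i h" "i+1 < k" "k \<le> n"
  shows "par k (ws lf i h x) (ws lf i h y)"
proof -
  have w: "wk lf i h x" "wk lf i h y" using dm_wk assms(1,3,4) by auto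
  have p: "x \<in> Cl" "y \<in> Cl" "s (k-1) x = x" "s (k-1) y = y" using assms(1) unfolding dm_def par_def by auto
  have h: "h \<in> Cl" using assms(2) unfolding hdim_def by auto
  have k: "i < k - 1" "k - 1 < n" "2 \<le> k" using assms(3,4) by auto
  have c: "ws lf i h x \<in> Cl" "ws lf i h y \<in> Cl" using ws_cell h p w k by auto
  have d: "s (k-1) (ws lf i h x) = ws lf i h x" "s (k-1) (ws lf i h y) = ws lf i h y"
    using ws_s[OF assms(2) k(1,2)] p w by auto
  have e: "s (k-2) x = s (k-2) y" "t (k-2) x = t (k-2) y" using assms(1) k unfolding dm_def par_def by auto
  have "s (k-2) (ws lf i h x) = s (k-2) (ws lf i h y) \<and> t (k-2) (ws lf i h x) = t (k-2) (ws lf i h y)"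
  proof (cases "i < k - 2")
    case True
    then show ?thesis using ws_s[OF assms(2) True, of x lf] ws_s[OF assms(2) True, of y lf]
        ws_t[OF assms(2) True, of x lf] ws_t[OF assms(2) True, of y lf] e p w k by auto
  next
    case False
    then have ii: "i = k - 2" using k by simp
    then have e2: "s i x = s i y" "t i x = t i y" using e by auto
    show ?thesis
    proof (cases lf)
      case True
      then have "t i h = s i x" "t i h = s i y" using w unfolding wk_def by auto
      then show ?thesis using True ii e2 p h k unfolding ws_def by simp
    next
      case False
      then have "t i x = s i h" "t i y = s i h" using w unfolding wk_def by auto
      then show ?thesis using False ii e2 p h k unfolding ws_def by simp
    qed
  qed
  then show ?thesis unfolding par_def using c d k by simp
qed

lemma N1: assumes "i < l" "l < n" "al \<in> Cl" "cc \<in> Cl" "t i al = s i cc"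
  shows "c i al cc = c l (c i al (s l cc)) (c i (t l al) cc)"
proof -
  have e: "t l al = s l (t l al)" "t l (s l cc) = s l cc" "t i al = s i (s l cc)"
    using assms st_ge[of l l al] ts_ge[of l l cc] ss_lt[of i l cc] by auto
  have "c i (c l al (t l al)) (c l (s l cc) cc) = c l (c i al (s l cc)) (c i (t l al) cc)"
    using interchange[OF assms(1,2,3) t_cell[OF assms(2,3)] s_cell[OF assms(2,4)] assms(4) e] .
  moreover have "c l al (t l al) = al" "c l (s l cc) cc = cc" using idr[OF assms(2,3)] idl[OF assms(2,4)] by auto
  ultimately show ?thesis by simp
qed
lemma N2: assumes "i < l" "l < n" "al \<in> Cl" "cc \<in> Cl" "t i al = s i cc"
  shows "c i al cc = c l (c i (s l al) cc) (c i al (t l cc))"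
proof -
  have e: "t l (s l al) = s l al" "t l cc = s l (t l cc)" "t i (s l al) = s i cc"
    using assms ts_ge[of l l al] st_ge[of l l cc] ts_lt[of i l al] by auto
  have "c i (c l (s l al) al) (c l cc (t l cc)) = c l (c i (s l al) cc) (c i al (t l cc))"
    using interchange[OF assms(1,2) s_cell[OF assms(2,3)] assms(3,4) t_cell[OF assms(2,4)] e] .
  moreover have "c l (s l al) al = al" "c l cc (t l cc) = cc" using idr[OF assms(2,4)] idl[OF assms(2,3)] by auto
  ultimately show ?thesis by simp
qed
lemma N1r: assumes "i < l" "l < n" "al \<in> Cl" "cc \<in> Cl" "t i cc = s i al"
  shows "c i cc al = c l (c i (s l cc) al) (c i cc (t l al))"
proof -
  have e: "t l (s l cc) = s l cc" "t l al = s l (t l al)" "t i (s l cc) = s i al"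
    using assms ts_ge[of l l cc] st_ge[of l l al] ts_lt[of i l cc] by auto
  have "c i (c l (s l cc) cc) (c l al (t l al)) = c l (c i (s l cc) al) (c i cc (t l al))"
    using interchange[OF assms(1,2) s_cell[OF assms(2,4)] assms(4,3) t_cell[OF assms(2,3)] e] .
  moreover have "c l (s l cc) cc = cc" "c l al (t l al) = al" using idr[OF assms(2,3)] idl[OF assms(2,4)] by auto
  ultimately show ?thesis by simp
qed
lemma N2r: assumes "i < l" "l < n" "al \<in> Cl" "cc \<in> Cl" "t i cc = s i al"
  shows "c i cc al = c l (c i cc (s l al)) (c i (t l cc) al)"
proof -
  have e: "t l cc = s l (t l cc)" "t l (s l al) = s l al" "t i cc = s i (s l al)"
    using assms st_ge[of l l cc] ts_ge[of l l al] ss_lt[of i l al] by auto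
  have "c i (c l cc (t l cc)) (c l (s l al) al) = c l (c i cc (s l al)) (c i (t l cc) al)"
    using interchange[OF assms(1,2,4) t_cell[OF assms(2,4)] s_cell[OF assms(2,3)] assms(3) e] .
  moreover have "c l cc (t l cc) = cc" "c l (s l al) al = al" using idr[OF assms(2,4)] idl[OF assms(2,3)] by auto
  ultimately show ?thesis by simp
qed

lemma conj_l:
  assumes l: "l = Suc i" "l < n" "l < k" "k \<le> n"
  and gh: "h \<in> Cl" "s l h = h" "g \<in> Cl" "s l g = g" "t i g = s i h"
  and ga: "E (Suc l) \<gamma>" "s l \<gamma> = c i g h" "t l \<gamma> = t i h"
  and d: "dm True i h k x y"
  shows "E (Suc l) (c i \<gamma> (s l x))" "E (Suc l) (c i \<gamma> (t l y))"
    "dm True l (c i \<gamma> (s l x)) k x y" "dm False l (c i \<gamma> (t l y)) k (c i (c i g h) x) (c i (c i g h) y)"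
    "wsrc True l (c i \<gamma> (s l x)) k x = wsrc False l (c i \<gamma> (t l y)) k (c i (c i g h) x)"
    "wtgt True l (c i \<gamma> (s l x)) k y = wtgt False l (c i \<gamma> (t l y)) k (c i (c i g h) y)"
    "\<And>cc. cc \<in> Cl \<Longrightarrow> s l cc = s l x \<Longrightarrow> t l cc = t l y \<Longrightarrow>
       ws True l (c i \<gamma> (s l x)) cc = ws False l (c i \<gamma> (t l y)) (c i (c i g h) cc)"
proof -
  define u where "u = s l x"
  define v where "v = t l y"
  define P where "P = c i g h"
  have il: "i < l" "l < n" "i < n" using l by auto
  have xy: "x \<in> Cl" "y \<in> Cl" "s (k-1) x = x" "s (k-1) y = y" using d unfolding dm_def par_def by auto
  have w: "t i h = s i x" "t i h = s i y" using dm_wk[OF d] l unfolding wk_def by auto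
  have u: "u \<in> Cl" "s l u = u" "t l u = u" "s i u = t i h" using xy il w unfolding u_def by auto
  have v: "v \<in> Cl" "s l v = v" "t l v = v" "s i v = t i h" using xy il w unfolding v_def by auto
  have gc: "\<gamma> \<in> Cl" using E_cell[OF ga(1)] .
  have tg: "t i \<gamma> = t i h" using lo_tt[of i l \<gamma> "t i h"] ga(3) il gc gh by simp
  have P: "P \<in> Cl" "s l P = P" "t l P = P" "s i P = s i g" "t i P = t i h"
    using gh il dim_s[of l g] dim_s[of l h] unfolding P_def by auto
  have hdP: "hdim i P" using P l unfolding hdim_def by simp
  have A: "c i \<gamma> u \<in> Cl" using gc u tg il by simp
  have B: "c i \<gamma> v \<in> Cl" using gc v tg il by simp
  show EA: "E (Suc l) (c i \<gamma> (s l x))" unfolding u_def[symmetric]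
    using ga(1) u tg il by (intro W_r[of "Suc l" \<gamma> i u]) simp_all
  show EB: "E (Suc l) (c i \<gamma> (t l y))" unfolding v_def[symmetric]
    using ga(1) v tg il by (intro W_r[of "Suc l" \<gamma> i v]) simp_all
  have tA: "t l (c i \<gamma> u) = u" using gc u tg il ga(3) by simp
  have sA: "s l (c i \<gamma> u) = c i P u" using gc u tg il ga(2) unfolding P_def by simp
  have sB: "s l (c i \<gamma> v) = c i P v" using gc v tg il ga(2) unfolding P_def by simp
  have tB: "t l (c i \<gamma> v) = v" using gc v tg il ga(3) by simp
  have par: "par k x y" using d unfolding dm_def by simp
  show "dm True l (c i \<gamma> (s l x)) k x y" unfolding u_def[symmetric] dm_def wk_def using par tA u_def by simp
  have dP: "dm True i P k x y" using par w P unfolding dm_def wk_def by simp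
  have parP: "par k (c i P x) (c i P y)" using par_ws[OF dP hdP] l unfolding ws_def by simp
  have "t l (c i P y) = c i P v" using P xy il w unfolding v_def by simp
  then show "dm False l (c i \<gamma> (t l y)) k (c i (c i g h) x) (c i (c i g h) y)"
    unfolding v_def[symmetric] P_def[symmetric] dm_def wk_def using parP sB by simp
  have nat: "\<And>cc. cc \<in> Cl \<Longrightarrow> s l cc = u \<Longrightarrow> t l cc = v \<Longrightarrow> c l (c i \<gamma> u) cc = c l (c i P cc) (c i \<gamma> v)"
  proof -
    fix cc assume cc: "cc \<in> Cl" "s l cc = u" "t l cc = v"
    have sc: "s i cc = t i h" using lo_ss[of i l cc u] cc il u by simp
    have "c i \<gamma> cc = c l (c i \<gamma> u) (c i (t i h) cc)" using N1[of i l \<gamma> cc] il gc cc sc tg ga(3) by simp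
    also have "c i (t i h) cc = cc" using sc cc il by simp
    finally have 1: "c i \<gamma> cc = c l (c i \<gamma> u) cc" .
    have "c i \<gamma> cc = c l (c i P cc) (c i \<gamma> v)" using N2[of i l \<gamma> cc] il gc cc sc tg ga(2) unfolding P_def by simp
    then show "c l (c i \<gamma> u) cc = c l (c i P cc) (c i \<gamma> v)" using 1 by simp
  qed
  show "\<And>cc. cc \<in> Cl \<Longrightarrow> s l cc = s l x \<Longrightarrow> t l cc = t l y \<Longrightarrow>
       ws True l (c i \<gamma> (s l x)) cc = ws False l (c i \<gamma> (t l y)) (c i (c i g h) cc)"
    using nat unfolding ws_def u_def v_def P_def by simp
  show "wsrc True l (c i \<gamma> (s l x)) k x = wsrc False l (c i \<gamma> (t l y)) k (c i (c i g h) x)"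
  proof (cases "l + 1 < k")
    case True
    have "t l x = t l y" using par_lo[OF par True l(4)] by simp
    then have "c l (c i \<gamma> u) x = c l (c i P x) (c i \<gamma> v)" using nat[of x] xy u_def v_def by simp
    then show ?thesis using True unfolding wsrc_def ws_def u_def v_def P_def by simp
  next
    case False
    then have "k - 1 = l" using l by simp
    then have "u = x" using xy u_def by simp
    then show ?thesis using False sA unfolding wsrc_def u_def P_def by simp
  qed
  show "wtgt True l (c i \<gamma> (s l x)) k y = wtgt False l (c i \<gamma> (t l y)) k (c i (c i g h) y)"
  proof (cases "l + 1 < k")
    case True
    have "s l y = s l x" using par_lo[OF par True l(4)] by simp
    then have "c l (c i \<gamma> u) y = c l (c i P y) (c i \<gamma> v)" using nat[of y] xy u_def v_def by simp
    then show ?thesis using True unfolding wtgt_def ws_def u_def v_def P_def by simp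
  next
    case False
    then have "k - 1 = l" using l by simp
    then have "v = y" using xy v_def dim_s[of l y] il by simp
    then show ?thesis using False tB unfolding wtgt_def v_def by simp
  qed
qed

lemma conj_r:
  assumes l: "l = Suc i" "l < n" "l < k" "k \<le> n"
  and gh: "h \<in> Cl" "s l h = h" "g \<in> Cl" "s l g = g" "t i h = s i g"
  and ga: "E (Suc l) \<gamma>" "s l \<gamma> = c i h g" "t l \<gamma> = s i h"
  and d: "dm False i h k x y"
  shows "E (Suc l) (c i (s l x) \<gamma>)" "E (Suc l) (c i (t l y) \<gamma>)"
    "dm True l (c i (s l x) \<gamma>) k x y" "dm False l (c i (t l y) \<gamma>) k (c i x (c i h g)) (c i y (c i h g))"
    "wsrc True l (c i (s l x) \<gamma>) k x = wsrc False l (c i (t l y) \<gamma>) k (c i x (c i h g))"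
    "wtgt True l (c i (s l x) \<gamma>) k y = wtgt False l (c i (t l y) \<gamma>) k (c i y (c i h g))"
    "\<And>cc. cc \<in> Cl \<Longrightarrow> s l cc = s l x \<Longrightarrow> t l cc = t l y \<Longrightarrow>
       ws True l (c i (s l x) \<gamma>) cc = ws False l (c i (t l y) \<gamma>) (c i cc (c i h g))"
proof -
  define u where "u = s l x"
  define v where "v = t l y"
  define P where "P = c i h g"
  have il: "i < l" "l < n" "i < n" using l by auto
  have xy: "x \<in> Cl" "y \<in> Cl" "s (k-1) x = x" "s (k-1) y = y" using d unfolding dm_def par_def by auto
  have w: "t i x = s i h" "t i y = s i h" using dm_wk[OF d] l unfolding wk_def by auto
  have u: "u \<in> Cl" "s l u = u" "t l u = u" "t i u = s i h" using xy il w unfolding u_def by auto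
  have v: "v \<in> Cl" "s l v = v" "t l v = v" "t i v = s i h" using xy il w unfolding v_def by auto
  have gc: "\<gamma> \<in> Cl" using E_cell[OF ga(1)] .
  have sg: "s i \<gamma> = s i h" using lo_ss[of i l \<gamma> "c i h g"] ga(2) il gc gh by simp
  have P: "P \<in> Cl" "s l P = P" "t l P = P" "s i P = s i h" "t i P = t i g"
    using gh il dim_s[of l g] dim_s[of l h] unfolding P_def by auto
  have hdP: "hdim i P" using P l unfolding hdim_def by simp
  show EA: "E (Suc l) (c i (s l x) \<gamma>)" unfolding u_def[symmetric]
    using ga(1) u sg il by (intro W_l[of "Suc l" \<gamma> i u]) simp_all
  show EB: "E (Suc l) (c i (t l y) \<gamma>)" unfolding v_def[symmetric]
    using ga(1) v sg il by (intro W_l[of "Suc l" \<gamma> i v]) simp_all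
  have tA: "t l (c i u \<gamma>) = u" using gc u sg il ga(3) by simp
  have sA: "s l (c i u \<gamma>) = c i u P" using gc u sg il ga(2) unfolding P_def by simp
  have sB: "s l (c i v \<gamma>) = c i v P" using gc v sg il ga(2) unfolding P_def by simp
  have tB: "t l (c i v \<gamma>) = v" using gc v sg il ga(3) by simp
  have par: "par k x y" using d unfolding dm_def by simp
  show "dm True l (c i (s l x) \<gamma>) k x y" unfolding u_def[symmetric] dm_def wk_def using par tA u_def by simp
  have dP: "dm False i P k x y" using par w P unfolding dm_def wk_def by simp
  have parP: "par k (c i x P) (c i y P)" using par_ws[OF dP hdP] l unfolding ws_def by simp
  have "t l (c i y P) = c i v P" using P xy il w unfolding v_def by simp
  then show "dm False l (c i (t l y) \<gamma>) k (c i x (c i h g)) (c i y (c i h g))"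
    unfolding v_def[symmetric] P_def[symmetric] dm_def wk_def using parP sB by simp
  have nat: "\<And>cc. cc \<in> Cl \<Longrightarrow> s l cc = u \<Longrightarrow> t l cc = v \<Longrightarrow> c l (c i u \<gamma>) cc = c l (c i cc P) (c i v \<gamma>)"
  proof -
    fix cc assume cc: "cc \<in> Cl" "s l cc = u" "t l cc = v"
    have sc: "t i cc = s i h" using lo_tt[of i l cc v] cc il v by simp
    have "c i cc \<gamma> = c l (c i u \<gamma>) (c i cc (s i h))" using N1r[of i l \<gamma> cc] il gc cc sc sg ga(3) by simp
    also have "c i cc (s i h) = cc" using sc cc il by simp
    finally have 1: "c i cc \<gamma> = c l (c i u \<gamma>) cc" .
    have "c i cc \<gamma> = c l (c i cc P) (c i v \<gamma>)" using N2r[of i l \<gamma> cc] il gc cc sc sg ga(2) unfolding P_def by simp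
    then show "c l (c i u \<gamma>) cc = c l (c i cc P) (c i v \<gamma>)" using 1 by simp
  qed
  show "\<And>cc. cc \<in> Cl \<Longrightarrow> s l cc = s l x \<Longrightarrow> t l cc = t l y \<Longrightarrow>
       ws True l (c i (s l x) \<gamma>) cc = ws False l (c i (t l y) \<gamma>) (c i cc (c i h g))"
    using nat unfolding ws_def u_def v_def P_def by simp
  show "wsrc True l (c i (s l x) \<gamma>) k x = wsrc False l (c i (t l y) \<gamma>) k (c i x (c i h g))"
  proof (cases "l + 1 < k")
    case True
    have "t l x = t l y" using par_lo[OF par True l(4)] by simp
    then have "c l (c i u \<gamma>) x = c l (c i x P) (c i v \<gamma>)" using nat[of x] xy u_def v_def by simp
    then show ?thesis using True unfolding wsrc_def ws_def u_def v_def P_def by simp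
  next
    case False
    then have "k - 1 = l" using l by simp
    then have "u = x" using xy u_def by simp
    then show ?thesis using False sA unfolding wsrc_def u_def P_def by simp
  qed
  show "wtgt True l (c i (s l x) \<gamma>) k y = wtgt False l (c i (t l y) \<gamma>) k (c i y (c i h g))"
  proof (cases "l + 1 < k")
    case True
    have "s l y = s l x" using par_lo[OF par True l(4)] by simp
    then have "c l (c i u \<gamma>) y = c l (c i y P) (c i v \<gamma>)" using nat[of y] xy u_def v_def by simp
    then show ?thesis using True unfolding wtgt_def ws_def u_def v_def P_def by simp
  next
    case False
    then have "k - 1 = l" using l by simp
    then have "v = y" using xy v_def dim_s[of l y] il by simp
    then show ?thesis using False tB unfolding wtgt_def v_def by simp
  qed
qed

definition ES where "ES lf i h k \<longleftrightarrow> (\<forall>x y b. dm lf i h k x y \<longrightarrow>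
   b \<in> hm k (wsrc lf i h k x) (wtgt lf i h k y) \<longrightarrow> s k b = b \<longrightarrow>
   (\<exists>a e. a \<in> hm k x y \<and> s k a = a \<and> E (Suc k) e \<and> s k e = ws lf i h a \<and> t k e = b))"
definition BJ where "BJ lf i h \<longleftrightarrow> (\<forall>x y. dm lf i h n x y \<longrightarrow>
   bij_betw (ws lf i h) (hm n x y) (hm n (wsrc lf i h n x) (wtgt lf i h n y)))"

lemma par_sym: "par k x y \<Longrightarrow> par k y x" unfolding par_def by auto
lemma par_refl: "x \<in> Cl \<Longrightarrow> s (k-1) x = x \<Longrightarrow> par k x x" unfolding par_def by auto

lemma FF_aux:
  assumes H: "hdim i h" and ESa: "\<forall>k. i+1 \<le> k \<and> k < n \<longrightarrow> ES lf i h k" and BJa: "BJ lf i h" and j: "j \<le> n"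
  shows "i + 2 \<le> j \<longrightarrow> (\<forall>a a' ep. dm lf i h j a a' \<longrightarrow> E j ep \<longrightarrow> s (j-1) ep = ws lf i h a \<longrightarrow>
     t (j-1) ep = ws lf i h a' \<longrightarrow> (\<exists>e. E j e \<and> s (j-1) e = a \<and> t (j-1) e = a'))"
  using j
proof (induction j rule: desc)
  case top
  show ?case
  proof (intro impI allI)
    fix a a' ep
    assume ij: "i + 2 \<le> n" and d: "dm lf i h n a a'" and ep: "E n ep" "s (n-1) ep = ws lf i h a" "t (n-1) ep = ws lf i h a'"
    define p where "p = n - 1"
    have ip: "i < p" "p < n" "i + 1 < n" using ij p_def by auto
    have hc: "h \<in> Cl" using H unfolding hdim_def by simp
    obtain ep' where ep': "ep' \<in> Cl" "s p ep' = t p ep" "t p ep' = s p ep"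
     "c p ep ep' = s p ep" "c p ep' ep = t p ep" using ep(1) E_top p_def by blast
    have epc: "ep \<in> Cl" using E_cell ep(1) .
    have aa: "a \<in> Cl" "a' \<in> Cl" "s p a = a" "s p a' = a'" using d unfolding dm_def par_def p_def by auto
    have taa: "t p a = a" "t p a' = a'" using aa dim_s ip by auto
    have wa: "wk lf i h a" "wk lf i h a'" using dm_wk[OF d] ip by auto
    have par: "par n a a'" using d unfolding dm_def by simp
    have d2: "dm lf i h n a' a" "dm lf i h n a a" "dm lf i h n a' a'"
      using par_sym[OF par] par_refl[of a n] par_refl[of a' n] aa wa p_def unfolding dm_def by auto
    have src: "\<And>x. wsrc lf i h n x = ws lf i h x" "\<And>x. wtgt lf i h n x = ws lf i h x"
      using ip unfolding wsrc_def wtgt_def by auto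
    have B1: "bij_betw (ws lf i h) (hm n a a') (hm n (ws lf i h a) (ws lf i h a'))"
      using BJa d src unfolding BJ_def by metis
    have B2: "bij_betw (ws lf i h) (hm n a' a) (hm n (ws lf i h a') (ws lf i h a))"
      using BJa d2(1) src unfolding BJ_def by metis
    have B3: "bij_betw (ws lf i h) (hm n a a) (hm n (ws lf i h a) (ws lf i h a))"
      using BJa d2(2) src unfolding BJ_def by metis
    have B4: "bij_betw (ws lf i h) (hm n a' a') (hm n (ws lf i h a') (ws lf i h a'))"
      using BJa d2(3) src unfolding BJ_def by metis
    have "ep \<in> hm n (ws lf i h a) (ws lf i h a')" using ep epc unfolding hm_def by simp
    then obtain e where e: "e \<in> hm n a a'" "ws lf i h e = ep" using B1 unfolding bij_betw_def by force
    have "ep' \<in> hm n (ws lf i h a') (ws lf i h a)" using ep ep' unfolding hm_def p_def by simp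
    then obtain e' where e': "e' \<in> hm n a' a" "ws lf i h e' = ep'" using B2 unfolding bij_betw_def by force
    have ec: "e \<in> Cl" "s p e = a" "t p e = a'" "e' \<in> Cl" "s p e' = a'" "t p e' = a"
      using e e' unfolding hm_def p_def by auto
    have we: "wk lf i h e" "wk lf i h e'" using hm_wk[OF d e(1)] hm_wk[OF d2(1) e'(1)] ip by auto
    have "ws lf i h (c p e e') = c p ep ep'" using ws_func[OF H ip(1,2) ec(1,4)] ec we e e' by simp
    also have "\<dots> = ws lf i h a" using ep'(4) ep(2) p_def by simp
    finally have 1: "ws lf i h (c p e e') = ws lf i h a" .
    have "c p e e' \<in> hm n a a" "a \<in> hm n a a" using ec aa taa ip unfolding hm_def p_def by auto
    then have ee': "c p e e' = a" using 1 B3 unfolding bij_betw_def inj_on_def by blast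
    have "ws lf i h (c p e' e) = c p ep' ep" using ws_func[OF H ip(1,2) ec(4,1)] ec we e e' by simp
    also have "\<dots> = ws lf i h a'" using ep'(5) ep(3) p_def by simp
    finally have 2: "ws lf i h (c p e' e) = ws lf i h a'" .
    have "c p e' e \<in> hm n a' a'" "a' \<in> hm n a' a'" using ec aa taa ip unfolding hm_def p_def by auto
    then have e'e: "c p e' e = a'" using 2 B4 unfolding bij_betw_def inj_on_def by blast
    have "E n e" unfolding E_top p_def[symmetric] using ip ec ee' e'e by auto
    then show "\<exists>e. E n e \<and> s (n-1) e = a \<and> t (n-1) e = a'" using ec p_def by auto
  qed
next
  case (step m)
  show ?case
  proof (intro impI allI)
    fix a a' ep
    assume ij: "i + 2 \<le> m" and d: "dm lf i h m a a'" and ep: "E m ep" "s (m-1) ep = ws lf i h a" "t (m-1) ep = ws lf i h a'"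
    define p where "p = m - 1"
    have ip: "i < p" "p < m" "m < n" "p < n" "i + 1 < m" "i + 1 \<le> m" using ij p_def step.hyps by auto
    have hc: "h \<in> Cl" using H unfolding hdim_def by simp
    obtain ep' where ep'E: "E m ep'" and ep': "s p ep' = t p ep" "t p ep' = s p ep"
      and rs: "\<exists>\<rho> \<sigma>. s m \<rho> = c p ep' ep \<and> t m \<rho> = t p ep \<and> E (Suc m) \<rho> \<and>
                 s m \<sigma> = c p ep ep' \<and> t m \<sigma> = s p ep \<and> E (Suc m) \<sigma>"
      using E_inv[OF ep(1)] ip p_def by blast
    obtain \<rho> \<sigma> where rs: "s m \<rho> = c p ep' ep" "t m \<rho> = t p ep" "E (Suc m) \<rho>"
       "s m \<sigma> = c p ep ep'" "t m \<sigma> = s p ep" "E (Suc m) \<sigma>" using rs by blast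
    have epc: "ep \<in> Cl" "ep' \<in> Cl" "s m ep = ep" "s m ep' = ep'" using E_cell ep(1) ep'E E_dim ip by auto
    have aa: "a \<in> Cl" "a' \<in> Cl" "s p a = a" "s p a' = a'" using d unfolding dm_def par_def p_def by auto
    have taa: "t p a = a" "t p a' = a'" using aa dim_s ip by auto
    have wa: "wk lf i h a" "wk lf i h a'" using dm_wk[OF d] ip by auto
    have par: "par m a a'" using d unfolding dm_def by simp
    have d2: "dm lf i h m a' a" using par_sym[OF par] wa unfolding dm_def by auto
    have src: "\<And>x. wsrc lf i h m x = ws lf i h x" "\<And>x. wtgt lf i h m x = ws lf i h x"
      using ip unfolding wsrc_def wtgt_def by auto
    have ESm: "ES lf i h m" using ESa ip by simp
    have "ep \<in> hm m (wsrc lf i h m a) (wtgt lf i h m a')" using ep epc src unfolding hm_def by simp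
    then obtain e \<psi> where e: "e \<in> hm m a a'" "s m e = e" "E (Suc m) \<psi>" "s m \<psi> = ws lf i h e" "t m \<psi> = ep"
      using ESm d epc unfolding ES_def by blast
    have "ep' \<in> hm m (wsrc lf i h m a') (wtgt lf i h m a)" using ep ep' epc src unfolding hm_def p_def by simp
    then obtain e' \<psi>' where e': "e' \<in> hm m a' a" "s m e' = e'" "E (Suc m) \<psi>'" "s m \<psi>' = ws lf i h e'" "t m \<psi>' = ep'"
      using ESm d2 epc unfolding ES_def by blast
    have ec: "e \<in> Cl" "s p e = a" "t p e = a'" "e' \<in> Cl" "s p e' = a'" "t p e' = a"
      using e e' unfolding hm_def p_def by auto
    have we: "wk lf i h e" "wk lf i h e'" using hm_wk[OF d e(1)] hm_wk[OF d2 e'(1)] ip by auto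
    have wse: "ws lf i h e \<in> Cl" "ws lf i h e' \<in> Cl" using ws_cell ec we hc ip by auto
    have wsd: "s m (ws lf i h e) = ws lf i h e" "s m (ws lf i h e') = ws lf i h e'"
      using ws_dim[OF H, of m] ec e e' we ip by auto
    have wsb: "t p (ws lf i h e) = ws lf i h a'" "s p (ws lf i h e) = ws lf i h a"
       "t p (ws lf i h e') = ws lf i h a" "s p (ws lf i h e') = ws lf i h a'"
      using ws_s[OF H ip(1,4)] ws_t[OF H ip(1,4)] ec we by auto
    have psc: "\<psi> \<in> Cl" "\<psi>' \<in> Cl" using E_cell e(3) e'(3) by auto
    have tpsi: "t p \<psi> = ws lf i h a'" "t p \<psi>' = ws lf i h a" "s p \<psi> = ws lf i h a" "s p \<psi>' = ws lf i h a'"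
      using lo_ts[of p m \<psi> "ws lf i h e"] lo_ts[of p m \<psi>' "ws lf i h e'"] lo_ss[of p m \<psi> "ws lf i h e"] lo_ss[of p m \<psi>' "ws lf i h e'"]
        ip psc e(4) e'(4) wsb wse by auto
    have epb: "s p ep = ws lf i h a" "t p ep = ws lf i h a'" "s p ep' = ws lf i h a'" "t p ep' = ws lf i h a"
      using ep ep' p_def by auto
    have Sm: "Suc m \<le> n" using ip by simp
    
    have X1: "E (Suc m) (c p \<psi> (ws lf i h e'))" using e(3) ip wse wsd tpsi wsb
      by (intro W_r[OF Sm]) simp_all
    have X2: "E (Suc m) (c p ep \<psi>')" using e'(3) ip epc tpsi epb
      by (intro W_l[OF Sm]) simp_all
    have sX1: "s m (c p \<psi> (ws lf i h e')) = c p (ws lf i h e) (ws lf i h e')"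
      using psc wse wsd tpsi wsb e(4) ip by simp
    have tX1: "t m (c p \<psi> (ws lf i h e')) = c p ep (ws lf i h e')"
      using psc wse wsd tpsi wsb e(5) ip dim_s[of m "ws lf i h e'"] by simp
    have sX2: "s m (c p ep \<psi>') = c p ep (ws lf i h e')"
      using psc epc tpsi epb e'(4) ip by simp
    have tX2: "t m (c p ep \<psi>') = c p ep ep'"
      using psc epc tpsi epb e'(5) ip dim_s[of m ep] by simp
    have X12: "E (Suc m) (c m (c p \<psi> (ws lf i h e')) (c p ep \<psi>'))"
      using T[OF Sm X1 X2] tX1 sX2 by simp
    have c12: "c p \<psi> (ws lf i h e') \<in> Cl" "c p ep \<psi>' \<in> Cl" using psc wse epc tpsi epb wsb ip by auto
    have Phi: "E (Suc m) (c m (c m (c p \<psi> (ws lf i h e')) (c p ep \<psi>')) \<sigma>)"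
      using T[OF Sm X12 rs(6)] tX1 sX2 tX2 rs(4) c12 ip by simp
    have sgc: "\<sigma> \<in> Cl" "\<rho> \<in> Cl" using E_cell rs(6) rs(3) by auto
    have cX: "c m (c p \<psi> (ws lf i h e')) (c p ep \<psi>') \<in> Cl" using c12 tX1 sX2 ip by simp
    have tX: "t m (c m (c p \<psi> (ws lf i h e')) (c p ep \<psi>')) = s m \<sigma>"
      using t_c_eq[OF ip(3) c12 ] tX1 sX2 tX2 rs(4) by simp
    have "s m (c m (c m (c p \<psi> (ws lf i h e')) (c p ep \<psi>')) \<sigma>) = s m (c p \<psi> (ws lf i h e'))"
      using s_c_eq[OF ip(3) cX sgc(1) tX] s_c_eq[OF ip(3) c12] tX1 sX2 by simp
    also have "\<dots> = ws lf i h (c p e e')" using sX1 ws_func[OF H ip(1,4) ec(1,4)] ec we by simp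
    finally have sPhi: "s m (c m (c m (c p \<psi> (ws lf i h e')) (c p ep \<psi>')) \<sigma>) = ws lf i h (c p e e')" .
    have tPhi: "t m (c m (c m (c p \<psi> (ws lf i h e')) (c p ep \<psi>')) \<sigma>) = ws lf i h a"
      using t_c_eq[OF ip(3) cX sgc(1) tX] rs(5) epb by simp
    have ee'c: "c p e e' \<in> Cl" "s m (c p e e') = c p e e'" "s p (c p e e') = a" "t p (c p e e') = a"
      using ec ip e(2) e'(2) by auto
    have dee: "dm lf i h (Suc m) (c p e e') a"
    proof -
      have "par (Suc m) (c p e e') a" unfolding par_def using ee'c aa taa ip p_def dim_mono_s[of p a m] by auto
      moreover have "wk lf i h (c p e e')" using wk_c[OF ip(1,4) ec(1,4)] ec we by simp
      ultimately show ?thesis using wa unfolding dm_def by (cases lf) auto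
    qed
    obtain \<kappa> where ka: "E (Suc m) \<kappa>" "s m \<kappa> = c p e e'" "t m \<kappa> = a"
      using step.IH ij dee Phi sPhi tPhi by fastforce
    
    have Y1: "E (Suc m) (c p \<psi>' (ws lf i h e))" using e'(3) ip wse wsd tpsi wsb
      by (intro W_r[OF Sm]) simp_all
    have Y2: "E (Suc m) (c p ep' \<psi>)" using e(3) ip epc tpsi epb
      by (intro W_l[OF Sm]) simp_all
    have tY1: "t m (c p \<psi>' (ws lf i h e)) = c p ep' (ws lf i h e)"
      using psc wse wsd tpsi wsb e'(5) ip dim_s[of m "ws lf i h e"] by simp
    have sY2: "s m (c p ep' \<psi>) = c p ep' (ws lf i h e)"
      using psc epc tpsi epb e(4) ip by simp
    have tY2: "t m (c p ep' \<psi>) = c p ep' ep"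
      using psc epc tpsi epb e(5) ip dim_s[of m ep'] by simp
    have Y12: "E (Suc m) (c m (c p \<psi>' (ws lf i h e)) (c p ep' \<psi>))"
      using T[OF Sm Y1 Y2] tY1 sY2 by simp
    have d12: "c p \<psi>' (ws lf i h e) \<in> Cl" "c p ep' \<psi> \<in> Cl" using psc wse epc tpsi epb wsb ip by auto
    have Phi': "E (Suc m) (c m (c m (c p \<psi>' (ws lf i h e)) (c p ep' \<psi>)) \<rho>)"
      using T[OF Sm Y12 rs(3)] tY1 sY2 tY2 rs(1) d12 ip by simp
    have cY: "c m (c p \<psi>' (ws lf i h e)) (c p ep' \<psi>) \<in> Cl" using d12 tY1 sY2 ip by simp
    have tY: "t m (c m (c p \<psi>' (ws lf i h e)) (c p ep' \<psi>)) = s m \<rho>"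
      using t_c_eq[OF ip(3) d12] tY1 sY2 tY2 rs(1) by simp
    have sY1: "s m (c p \<psi>' (ws lf i h e)) = c p (ws lf i h e') (ws lf i h e)"
      using psc wse wsd tpsi wsb e'(4) ip by simp
    have "s m (c m (c m (c p \<psi>' (ws lf i h e)) (c p ep' \<psi>)) \<rho>) = s m (c p \<psi>' (ws lf i h e))"
      using s_c_eq[OF ip(3) cY sgc(2) tY] s_c_eq[OF ip(3) d12] tY1 sY2 by simp
    also have "\<dots> = ws lf i h (c p e' e)" using sY1 ws_func[OF H ip(1,4) ec(4,1)] ec we by simp
    finally have sPhi': "s m (c m (c m (c p \<psi>' (ws lf i h e)) (c p ep' \<psi>)) \<rho>) = ws lf i h (c p e' e)" .
    have tPhi': "t m (c m (c m (c p \<psi>' (ws lf i h e)) (c p ep' \<psi>)) \<rho>) = ws lf i h a'"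
      using t_c_eq[OF ip(3) cY sgc(2) tY] rs(2) epb by simp
    have e'ec: "c p e' e \<in> Cl" "s m (c p e' e) = c p e' e" "s p (c p e' e) = a'" "t p (c p e' e) = a'"
      using ec ip e(2) e'(2) by auto
    have de'e: "dm lf i h (Suc m) (c p e' e) a'"
    proof -
      have "par (Suc m) (c p e' e) a'" unfolding par_def using e'ec aa taa ip p_def dim_mono_s[of p a' m] by auto
      moreover have "wk lf i h (c p e' e)" using wk_c[OF ip(1,4) ec(4,1)] ec we by simp
      ultimately show ?thesis using wa unfolding dm_def by (cases lf) auto
    qed
    obtain \<kappa>' where ka': "E (Suc m) \<kappa>'" "s m \<kappa>' = c p e' e" "t m \<kappa>' = a'"
      using step.IH ij de'e Phi' sPhi' tPhi' by fastforce
    have "1 \<le> m" using ip by simp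
    then have "E m e" unfolding E_step[OF ip(3)] p_def[symmetric]
      using ec e(2) e'(2) ka ka' by blast
    then show "\<exists>e. E m e \<and> s (m-1) e = a \<and> t (m-1) e = a'" using ec p_def by auto
  qed
qed



lemma wsassoc: assumes "i < n" "g \<in> Cl" "h \<in> Cl" "a \<in> Cl" "wk lf i g h" "wk lf i h a"
  shows "ws lf i g (ws lf i h a) = ws lf i (ws lf i g h) a"
proof (cases lf)
  case True
  then show ?thesis using assoc[of i g h a] assms unfolding ws_def wk_def by simp
next
  case False
  then show ?thesis using assoc[of i a h g] assms unfolding ws_def wk_def by simp
qed

lemma wk_ws: assumes "i < n" "g \<in> Cl" "w \<in> Cl" "wk lf i g w" "wk lf i h g" shows "wk lf i h (ws lf i g w)"
  using assms unfolding ws_def wk_def by (cases lf) auto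

lemma hm_lo: assumes "a \<in> hm k x y" "j < k" "k \<le> n" shows "s j a = s j x" "t j a = t j y"
proof -
  have a: "a \<in> Cl" "x = s (k-1) a" "y = t (k-1) a" using assms(1) unfolding hm_def by auto
  have "j \<le> k - 1" "k - 1 < n" using assms by auto
  then show "s j a = s j x" "t j a = t j y" using a
    by (cases "j = k - 1"; simp)+
qed

lemma par_hm: assumes "a \<in> hm k x y" "b \<in> hm k x y" "s k a = a" "s k b = b"
  shows "par (Suc k) a b"
  using assms unfolding par_def hm_def by auto

lemma hd_E: "E (Suc l) A \<Longrightarrow> hdim l A"
  unfolding hdim_def using E_cell E_dim by (metis Suc_eq_plus1)

lemma hd_P: assumes "l = Suc i" "l < n" "g \<in> Cl" "h \<in> Cl" "s l g = g" "s l h = h" "wk lf i g h"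
  shows "hdim i (ws lf i g h)" "ws lf i g h \<in> Cl" "s l (ws lf i g h) = ws lf i g h"
proof -
  have i: "i < l" "i < n" using assms by auto
  show c: "ws lf i g h \<in> Cl" using ws_cell[OF i(2) assms(3,4,7)] .
  show sP: "s l (ws lf i g h) = ws lf i g h" using assms i unfolding ws_def wk_def by (cases lf) auto
  show "hdim i (ws lf i g h)" unfolding hdim_def using c sP assms(1) by simp
qed

lemma dm_P: assumes "dm lf i h k x y" "wk lf i g h" "g \<in> Cl" "h \<in> Cl" "i < n"
  shows "dm lf i (ws lf i g h) k x y"
  using assms unfolding dm_def wk_def ws_def by (cases lf) auto

definition Psi where "Psi l \<longleftrightarrow> (\<forall>lf h. E l h \<longrightarrow> (\<forall>k. l \<le> k \<and> k < n \<longrightarrow> ES lf (l-1) h k) \<and> BJ lf (l-1) h)"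

lemma FFP: assumes "Psi (Suc l)" "E (Suc l) A" "l + 2 \<le> j" "j \<le> n" "dm lf l A j a a'" "E j ep"
  "s (j-1) ep = ws lf l A a" "t (j-1) ep = ws lf l A a'" shows "\<exists>e. E j e \<and> s (j-1) e = a \<and> t (j-1) e = a'"
proof -
  have H: "hdim l A" using hd_E assms(2) .
  have ESa: "\<forall>k. l+1 \<le> k \<and> k < n \<longrightarrow> ES lf l A k" and BJa: "BJ lf l A" using assms(1,2) unfolding Psi_def by auto
  show ?thesis using FF_aux[OF H ESa BJa assms(4)] assms(3,5-8) by blast
qed

lemma conj: assumes l: "l = Suc i" "l < n" "l < k" "k \<le> n"
  and gh: "h \<in> Cl" "s l h = h" "g \<in> Cl" "s l g = g" "wk lf i g h"
  and ga: "E (Suc l) \<gamma>" "s l \<gamma> = ws lf i g h" "t l \<gamma> = (if lf then t i h else s i h)"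
  and d: "dm lf i h k x y"
  shows "E (Suc l) (ws (\<not>lf) i (s l x) \<gamma>)" "E (Suc l) (ws (\<not>lf) i (t l y) \<gamma>)"
  "dm True l (ws (\<not>lf) i (s l x) \<gamma>) k x y"
  "dm False l (ws (\<not>lf) i (t l y) \<gamma>) k (ws lf i (ws lf i g h) x) (ws lf i (ws lf i g h) y)"
  "wsrc True l (ws (\<not>lf) i (s l x) \<gamma>) k x = wsrc False l (ws (\<not>lf) i (t l y) \<gamma>) k (ws lf i (ws lf i g h) x)"
  "wtgt True l (ws (\<not>lf) i (s l x) \<gamma>) k y = wtgt False l (ws (\<not>lf) i (t l y) \<gamma>) k (ws lf i (ws lf i g h) y)"
  "\<And>cc. cc \<in> Cl \<Longrightarrow> s l cc = s l x \<Longrightarrow> t l cc = t l y \<Longrightarrow>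
     ws True l (ws (\<not>lf) i (s l x) \<gamma>) cc = ws False l (ws (\<not>lf) i (t l y) \<gamma>) (ws lf i (ws lf i g h) cc)"
proof -
  have "(E (Suc l) (ws (\<not>lf) i (s l x) \<gamma>) \<and> E (Suc l) (ws (\<not>lf) i (t l y) \<gamma>) \<and>
    dm True l (ws (\<not>lf) i (s l x) \<gamma>) k x y \<and>
    dm False l (ws (\<not>lf) i (t l y) \<gamma>) k (ws lf i (ws lf i g h) x) (ws lf i (ws lf i g h) y) \<and>
    wsrc True l (ws (\<not>lf) i (s l x) \<gamma>) k x = wsrc False l (ws (\<not>lf) i (t l y) \<gamma>) k (ws lf i (ws lf i g h) x) \<and>
    wtgt True l (ws (\<not>lf) i (s l x) \<gamma>) k y = wtgt False l (ws (\<not>lf) i (t l y) \<gamma>) k (ws lf i (ws lf i g h) y)) \<and>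
    (\<forall>cc. cc \<in> Cl \<longrightarrow> s l cc = s l x \<longrightarrow> t l cc = t l y \<longrightarrow>
     ws True l (ws (\<not>lf) i (s l x) \<gamma>) cc = ws False l (ws (\<not>lf) i (t l y) \<gamma>) (ws lf i (ws lf i g h) cc))"
  proof (cases lf)
    case True
    have w: "t i g = s i h" using gh(5) True unfolding wk_def by simp
    have ga': "s l \<gamma> = c i g h" "t l \<gamma> = t i h" using ga(2,3) True unfolding ws_def by auto
    have d': "dm True i h k x y" using d True by simp
    note cl = conj_l[OF l gh(1-4) w ga(1) ga' d']
    show ?thesis using cl True unfolding ws_def by simp
  next
    case False
    have w: "t i h = s i g" using gh(5) False unfolding wk_def by simp
    have ga': "s l \<gamma> = c i h g" "t l \<gamma> = s i h" using ga(2,3) False unfolding ws_def by auto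
    have d': "dm False i h k x y" using d False by simp
    note cr = conj_r[OF l gh(1-4) w ga(1) ga' d']
    show ?thesis using cr False unfolding ws_def by simp
  qed
  then show "E (Suc l) (ws (\<not>lf) i (s l x) \<gamma>)" "E (Suc l) (ws (\<not>lf) i (t l y) \<gamma>)"
  "dm True l (ws (\<not>lf) i (s l x) \<gamma>) k x y"
  "dm False l (ws (\<not>lf) i (t l y) \<gamma>) k (ws lf i (ws lf i g h) x) (ws lf i (ws lf i g h) y)"
  "wsrc True l (ws (\<not>lf) i (s l x) \<gamma>) k x = wsrc False l (ws (\<not>lf) i (t l y) \<gamma>) k (ws lf i (ws lf i g h) x)"
  "wtgt True l (ws (\<not>lf) i (s l x) \<gamma>) k y = wtgt False l (ws (\<not>lf) i (t l y) \<gamma>) k (ws lf i (ws lf i g h) y)"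
  "\<And>cc. cc \<in> Cl \<Longrightarrow> s l cc = s l x \<Longrightarrow> t l cc = t l y \<Longrightarrow>
     ws True l (ws (\<not>lf) i (s l x) \<gamma>) cc = ws False l (ws (\<not>lf) i (t l y) \<gamma>) (ws lf i (ws lf i g h) cc)"
    by auto
qed

lemma GF_bij: assumes P: "Psi (Suc l)" and l: "l = Suc i" "l < n"
  and gh: "h \<in> Cl" "s l h = h" "g \<in> Cl" "s l g = g" "wk lf i g h"
  and ga: "E (Suc l) \<gamma>" "s l \<gamma> = ws lf i g h" "t l \<gamma> = (if lf then t i h else s i h)"
  and d: "dm lf i h n x y"
  shows "bij_betw (ws lf i (ws lf i g h)) (hm n x y) (hm n (ws lf i (ws lf i g h) x) (ws lf i (ws lf i g h) y))"
proof -
  define A where "A = ws (\<not>lf) i (s l x) \<gamma>"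
  define B where "B = ws (\<not>lf) i (t l y) \<gamma>"
  define Q where "Q = ws lf i (ws lf i g h)"
  have ln: "l < n" "n \<le> n" using l by auto
  note cj = conj[OF l ln gh ga d, folded A_def B_def Q_def]
  have bL: "bij_betw (ws True l A) (hm n x y) (hm n (wsrc True l A n x) (wtgt True l A n y))"
    using P cj(1,3) l unfolding Psi_def BJ_def by auto
  have bR: "bij_betw (ws False l B) (hm n (Q x) (Q y)) (hm n (wsrc True l A n x) (wtgt True l A n y))"
    using P cj(2,4,5,6) l unfolding Psi_def BJ_def by auto
  have hP: "hdim i (ws lf i g h)" using hd_P[OF l gh(3,1,4,2,5)] by simp
  have dP: "dm lf i (ws lf i g h) n x y" using dm_P[OF d gh(5,3,1)] l by simp
  have img: "Q ` hm n x y \<subseteq> hm n (Q x) (Q y)"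
  proof
    fix z assume "z \<in> Q ` hm n x y"
    then obtain a where a: "a \<in> hm n x y" "z = Q a" by blast
    have "ws lf i (ws lf i g h) a \<in> hm n (wsrc lf i (ws lf i g h) n x) (wtgt lf i (ws lf i g h) n y)"
      using ws_hm[OF dP hP a(1)] l by simp
    then show "z \<in> hm n (Q x) (Q y)" using a l unfolding Q_def wsrc_def wtgt_def by simp
  qed
  have eq: "\<And>a. a \<in> hm n x y \<Longrightarrow> ws True l A a = (ws False l B \<circ> Q) a"
  proof -
    fix a assume a: "a \<in> hm n x y"
    have "a \<in> Cl" "s l a = s l x" "t l a = t l y" using hm_cell[OF a] hm_lo[OF a] l by auto
    then show "ws True l A a = (ws False l B \<circ> Q) a" using cj(7) unfolding A_def B_def Q_def by simp
  qed
  have "bij_betw (ws False l B \<circ> Q) (hm n x y) (hm n (wsrc True l A n x) (wtgt True l A n y))"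
    using bij_betw_cong[of "hm n x y" "ws True l A" "ws False l B \<circ> Q"] eq bL by simp
  then show ?thesis using bij_betw_comp_iff2[OF bR img] unfolding Q_def by simp
qed

lemma E_pair: assumes "E l h" "l < n" "l = Suc i"
  obtains g \<alpha> \<beta> where "g \<in> Cl" "s l g = g" "s i g = t i h" "t i g = s i h"
     "s l \<alpha> = c i g h" "t l \<alpha> = t i h" "E (Suc l) \<alpha>"
     "s l \<beta> = c i h g" "t l \<beta> = s i h" "E (Suc l) \<beta>"
  using assms E_step[OF assms(2), of h] by auto

lemma BJ_step: assumes P: "Psi (Suc l)" and l: "l = Suc i" "l < n" and h: "E l h" shows "BJ lf i h"
  unfolding BJ_def
proof (intro allI impI)
  fix x y assume d: "dm lf i h n x y"
  obtain g \<alpha> \<beta> where g: "g \<in> Cl" "s l g = g" "s i g = t i h" "t i g = s i h"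
     "s l \<alpha> = c i g h" "t l \<alpha> = t i h" "E (Suc l) \<alpha>"
     "s l \<beta> = c i h g" "t l \<beta> = s i h" "E (Suc l) \<beta>" using E_pair[OF h l(2,1)] by blast
  have hc: "h \<in> Cl" "s l h = h" using E_cell[OF h] E_dim[OF h l(2)] by auto
  have i: "i < n" "i + 1 < n" using l by auto
  define F where "F = ws lf i h"
  define G where "G = ws lf i g"
  define \<gamma>1 where "\<gamma>1 = (if lf then \<alpha> else \<beta>)"
  define \<gamma>2 where "\<gamma>2 = (if lf then \<beta> else \<alpha>)"
  have wgh: "wk lf i g h" "wk lf i h g" using g unfolding wk_def by auto
  have g1: "E (Suc l) \<gamma>1" "s l \<gamma>1 = ws lf i g h" "t l \<gamma>1 = (if lf then t i h else s i h)"
    using g unfolding \<gamma>1_def ws_def by auto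
  have g2: "E (Suc l) \<gamma>2" "s l \<gamma>2 = ws lf i h g" "t l \<gamma>2 = (if lf then t i g else s i g)"
    using g unfolding \<gamma>2_def ws_def by auto
  have b1: "bij_betw (ws lf i (ws lf i g h)) (hm n x y) (hm n (ws lf i (ws lf i g h) x) (ws lf i (ws lf i g h) y))"
    using GF_bij[OF P l hc g(1,2) wgh(1) g1 d] .
  have xy: "x \<in> Cl" "y \<in> Cl" "wk lf i h x" "wk lf i h y" using d dm_wk[OF d] l unfolding dm_def par_def by auto
  have Fx: "F x \<in> Cl" "F y \<in> Cl" using ws_cell xy hc i unfolding F_def by auto
  have hdh: "hdim i h" using hd_E[of i h] h l by simp
  have dF: "dm lf i g n (F x) (F y)"
  proof -
    have "par n (F x) (F y)" using par_ws[OF d hdh] l unfolding F_def by simp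
    moreover have "wk lf i g (F x)" "wk lf i g (F y)" using wk_ws[OF i(1) hc(1)] xy wgh unfolding F_def by auto
    ultimately show ?thesis unfolding dm_def by (cases lf) auto
  qed
  have b2: "bij_betw (ws lf i (ws lf i h g)) (hm n (F x) (F y)) (hm n (ws lf i (ws lf i h g) (F x)) (ws lf i (ws lf i h g) (F y)))"
    using GF_bij[OF P l g(1,2) hc wgh(2) g2 dF] .
  have srcF: "wsrc lf i h n x = F x" "wtgt lf i h n y = F y" using l unfolding wsrc_def wtgt_def F_def by auto
  have imgF: "F ` hm n x y \<subseteq> hm n (F x) (F y)" using ws_hm[OF d hdh] l srcF unfolding F_def by auto
  have hdg: "hdim i g" using g l unfolding hdim_def by simp
  have GFx: "G (F x) = ws lf i (ws lf i g h) x" "G (F y) = ws lf i (ws lf i g h) y"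
    using wsassoc[OF i(1) g(1) hc(1)] xy wgh unfolding F_def G_def by auto
  have imgG: "G ` hm n (F x) (F y) \<subseteq> hm n (G (F x)) (G (F y))"
    using ws_hm[OF dF hdg] l unfolding wsrc_def wtgt_def G_def by auto
  have injG: "inj_on G (hm n (F x) (F y))"
  proof (rule inj_onI)
    fix a b assume a: "a \<in> hm n (F x) (F y)" "b \<in> hm n (F x) (F y)" "G a = G b"
    have wa: "wk lf i g a" "wk lf i g b" using hm_wk[OF dF] a l by auto
    have "ws lf i (ws lf i h g) a = ws lf i (ws lf i h g) b"
      using wsassoc[OF i(1) hc(1) g(1), of a lf] wsassoc[OF i(1) hc(1) g(1), of b lf] wa wgh hm_cell a
      unfolding G_def by metis
    then show "a = b" using b2 a unfolding bij_betw_def inj_on_def by blast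
  qed
  have surjG: "hm n (G (F x)) (G (F y)) \<subseteq> G ` hm n (F x) (F y)"
  proof
    fix z assume z: "z \<in> hm n (G (F x)) (G (F y))"
    then obtain w where w: "w \<in> hm n x y" "z = ws lf i (ws lf i g h) w" using b1 GFx unfolding bij_betw_def by auto
    have "z = G (F w)" using wsassoc[OF i(1) g(1) hc(1), of w lf] w hm_cell hm_wk[OF d w(1)] wgh l
      unfolding F_def G_def by auto
    then show "z \<in> G ` hm n (F x) (F y)" using imgF w by auto
  qed
  have bG: "bij_betw G (hm n (F x) (F y)) (hm n (G (F x)) (G (F y)))"
    unfolding bij_betw_def using injG imgG surjG by auto
  have eq: "\<And>a. a \<in> hm n x y \<Longrightarrow> (G \<circ> F) a = ws lf i (ws lf i g h) a"
    using wsassoc[OF i(1) g(1) hc(1)] hm_cell hm_wk[OF d] wgh l unfolding F_def G_def by auto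
  have "bij_betw (G \<circ> F) (hm n x y) (hm n (G (F x)) (G (F y)))"
    using bij_betw_cong[of "hm n x y" "G \<circ> F" "ws lf i (ws lf i g h)"] eq b1 GFx by simp
  then have "bij_betw F (hm n x y) (hm n (F x) (F y))" using bij_betw_comp_iff2[OF bG imgF] by simp
  then show "bij_betw (ws lf i h) (hm n x y) (hm n (wsrc lf i h n x) (wtgt lf i h n y))"
    using srcF unfolding F_def by simp
qed

lemma ES_base: assumes l: "l = Suc i" "l < n" and h: "E l h" shows "ES lf i h l"
  unfolding ES_def
proof (intro allI impI)
  fix x y b assume d: "dm lf i h l x y" and b: "b \<in> hm l (wsrc lf i h l x) (wtgt lf i h l y)" and sb: "s l b = b"
  obtain g \<alpha> \<beta> where g: "g \<in> Cl" "s l g = g" "s i g = t i h" "t i g = s i h"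
     "s l \<alpha> = c i g h" "t l \<alpha> = t i h" "E (Suc l) \<alpha>"
     "s l \<beta> = c i h g" "t l \<beta> = s i h" "E (Suc l) \<beta>" using E_pair[OF h l(2,1)] by blast
  have hc: "h \<in> Cl" "s l h = h" using E_cell[OF h] E_dim[OF h l(2)] by auto
  have i: "i < n" "i < l" "Suc l \<le> n" using l by auto
  have xy: "x \<in> Cl" "y \<in> Cl" "s i x = x" "s i y = y" using d l unfolding dm_def par_def by auto
  have txy: "t i x = x" "t i y = y" using xy dim_s i by auto
  have ab: "\<alpha> \<in> Cl" "\<beta> \<in> Cl" using E_cell g by auto
  have bc: "b \<in> Cl" using b hm_cell by auto
  show "\<exists>a e. a \<in> hm l x y \<and> s l a = a \<and> E (Suc l) e \<and> s l e = ws lf i h a \<and> t l e = b"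
  proof (cases lf)
    case True
    have w: "t i h = x" using d True xy l unfolding dm_def wk_def by simp
    have bb: "s i b = s i h" "t i b = y" using b True l unfolding hm_def wsrc_def wtgt_def by auto
    have a: "c i g b \<in> hm l x y" using g bc bb w i unfolding hm_def l by simp
    have sa: "s l (c i g b) = c i g b" using g bc bb i sb by simp
    have tb: "t i \<beta> = s i b" using lo_tt[of i l \<beta> "s i h"] g ab i bb hc by simp
    have E1: "E (Suc l) (c i \<beta> b)" using g(10) i bc sb tb by (intro W_r[OF i(3)]) simp_all
    have "s l (c i \<beta> b) = c i (c i h g) b" using g ab bc tb sb i by simp
    also have "\<dots> = c i h (c i g b)" using assoc[of i h g b] g hc bc bb i by simp
    finally have s1: "s l (c i \<beta> b) = ws lf i h (c i g b)" using True unfolding ws_def by simp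
    have t1: "t l (c i \<beta> b) = b" using g ab bc tb i bb dim_s[of l b] sb by simp
    show ?thesis using a sa E1 s1 t1 by blast
  next
    case False
    have w: "y = s i h" using d False xy txy l unfolding dm_def wk_def by simp
    have bb: "s i b = x" "t i b = t i h" using b False l unfolding hm_def wsrc_def wtgt_def by auto
    have a: "c i b g \<in> hm l x y" using g bc bb w i unfolding hm_def l by simp
    have sa: "s l (c i b g) = c i b g" using g bc bb i sb by simp
    have tb: "t i b = s i \<alpha>" using lo_ss[of i l \<alpha> "c i g h"] g ab i bb hc by simp
    have E1: "E (Suc l) (c i b \<alpha>)" using g(7) i bc sb tb by (intro W_l[OF i(3)]) simp_all
    have "s l (c i b \<alpha>) = c i b (c i g h)" using g ab bc tb sb i by simp
    also have "\<dots> = c i (c i b g) h" using assoc[of i b g h] g hc bc bb i by simp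
    finally have s1: "s l (c i b \<alpha>) = ws lf i h (c i b g)" using False unfolding ws_def by simp
    have t1: "t l (c i b \<alpha>) = b" using g ab bc tb i bb dim_s[of l b] sb by simp
    show ?thesis using a sa E1 s1 t1 by blast
  qed
qed

lemma W_ws: "j \<le> n \<Longrightarrow> E j f \<Longrightarrow> i + 1 < j \<Longrightarrow> h \<in> Cl \<Longrightarrow> s (j-1) h = h \<Longrightarrow> wk lf i h f \<Longrightarrow> E j (ws lf i h f)"
  unfolding ws_def wk_def using W_l W_r by (cases lf) auto

lemma wk_sk: "i < k \<Longrightarrow> k < n \<Longrightarrow> e \<in> Cl \<Longrightarrow> wk lf i h (s k e) \<Longrightarrow> wk lf i h e"
  unfolding wk_def by (cases lf) auto

lemma ES_step: assumes P: "Psi (Suc l)" and l: "l = Suc i" "l < k" "k < n" and h: "E l h" shows "ES lf i h k"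
  unfolding ES_def
proof (intro allI impI)
  fix x y b assume d: "dm lf i h k x y" and b0: "b \<in> hm k (wsrc lf i h k x) (wtgt lf i h k y)" and sb: "s k b = b"
  have ln: "l < n" using l by simp
  obtain g \<alpha> \<beta> where g: "g \<in> Cl" "s l g = g" "s i g = t i h" "t i g = s i h"
     "s l \<alpha> = c i g h" "t l \<alpha> = t i h" "E (Suc l) \<alpha>"
     "s l \<beta> = c i h g" "t l \<beta> = s i h" "E (Suc l) \<beta>" using E_pair[OF h ln l(1)] by blast
  have hc: "h \<in> Cl" "s l h = h" using E_cell[OF h] E_dim[OF h ln] by auto
  have i: "i < n" "i < l" "i < k" "i + 1 < k" "Suc k \<le> n" "k \<le> n" "l + 1 \<le> k" "l + 2 \<le> Suc k" using l by auto
  define F where "F = ws lf i h"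
  define G where "G = ws lf i g"
  define Q where "Q = ws lf i (ws lf i g h)"
  define Q' where "Q' = ws lf i (ws lf i h g)"
  define \<gamma>1 where "\<gamma>1 = (if lf then \<alpha> else \<beta>)"
  define \<gamma>2 where "\<gamma>2 = (if lf then \<beta> else \<alpha>)"
  have wgh: "wk lf i g h" "wk lf i h g" using g unfolding wk_def by auto
  have g1: "E (Suc l) \<gamma>1" "s l \<gamma>1 = ws lf i g h" "t l \<gamma>1 = (if lf then t i h else s i h)"
    using g unfolding \<gamma>1_def ws_def by auto
  have g2: "E (Suc l) \<gamma>2" "s l \<gamma>2 = ws lf i h g" "t l \<gamma>2 = (if lf then t i g else s i g)"
    using g unfolding \<gamma>2_def ws_def by auto
  have xy: "x \<in> Cl" "y \<in> Cl" "wk lf i h x" "wk lf i h y" using d dm_wk[OF d] i unfolding dm_def par_def by auto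
  have hdh: "hdim i h" using hd_E[of i h] h l by simp
  have hdg: "hdim i g" using g l ln unfolding hdim_def by simp
  have srcF: "wsrc lf i h k x = F x" "wtgt lf i h k y = F y" using i unfolding wsrc_def wtgt_def F_def by auto
  have b: "b \<in> hm k (F x) (F y)" using b0 srcF by simp
  have bc: "b \<in> Cl" using hm_cell b by simp
  have dF: "dm lf i g k (F x) (F y)"
  proof -
    have "par k (F x) (F y)" using par_ws[OF d hdh] i unfolding F_def by simp
    moreover have "wk lf i g (F x)" "wk lf i g (F y)" using wk_ws[OF i(1) hc(1)] xy wgh unfolding F_def by auto
    ultimately show ?thesis unfolding dm_def by (cases lf) auto
  qed
  define A where "A = ws (\<not>lf) i (s l x) \<gamma>1"
  define B where "B = ws (\<not>lf) i (t l y) \<gamma>1"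
  define A' where "A' = ws (\<not>lf) i (s l (F x)) \<gamma>2"
  define B' where "B' = ws (\<not>lf) i (t l (F y)) \<gamma>2"
  note cj1 = conj[OF l(1) ln l(2) i(6) hc g(1,2) wgh(1) g1 d, folded A_def B_def Q_def]
  note cj2 = conj[OF l(1) ln l(2) i(6) g(1,2) hc wgh(2) g2 dF, folded A'_def B'_def Q'_def]
  have hdB: "hdim l B" "hdim l B'" using hd_E cj1(2) cj2(2) by auto
  have Bc: "B' \<in> Cl" "s k B' = B'" using hdB(2) hd_s[OF hdB(2) l(2) l(3)] unfolding hdim_def by auto
  
  have wb: "wk lf i g b" using hm_wk[OF dF b] i by simp
  have GFx: "G (F x) = Q x" "G (F y) = Q y"
    using wsassoc[OF i(1) g(1) hc(1)] xy wgh unfolding F_def G_def Q_def by auto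
  have b': "G b \<in> hm k (Q x) (Q y)"
    using ws_hm[OF dF hdg b] i GFx unfolding wsrc_def wtgt_def G_def by auto
  have b'c: "G b \<in> Cl" using hm_cell b' by simp
  have sb': "s k (G b) = G b" using ws_dim[OF hdg i(3) l(3) bc wb sb] unfolding G_def by simp
  have wb': "wk False l B (G b)" using hm_wk[OF cj1(4) b'] i by simp
  have Rb': "ws False l B (G b) \<in> hm k (wsrc True l A k x) (wtgt True l A k y)"
    using ws_hm[OF cj1(4) hdB(1) b'] i cj1(5,6) by simp
  have sRb': "s k (ws False l B (G b)) = ws False l B (G b)" using ws_dim[OF hdB(1) l(2,3) b'c wb' sb'] .
  have ESA: "ES True l A k" using P cj1(1) i l unfolding Psi_def by auto
  obtain a e1 where a: "a \<in> hm k x y" "s k a = a" "E (Suc k) e1" "s k e1 = ws True l A a"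
     "t k e1 = ws False l B (G b)"
    using ESA cj1(3) Rb' sRb' unfolding ES_def by blast
  have ac: "a \<in> Cl" "s l a = s l x" "t l a = t l y" using hm_cell[OF a(1)] hm_lo[OF a(1)] l by auto
  have LA: "ws True l A a = ws False l B (Q a)" using cj1(7)[OF ac] .
  have hdP: "hdim i (ws lf i g h)" using hd_P[OF l(1) ln g(1) hc(1) g(2) hc(2) wgh(1)] by simp
  have dP: "dm lf i (ws lf i g h) k x y" using dm_P[OF d wgh(1) g(1) hc(1) i(1)] .
  have Qa: "Q a \<in> hm k (Q x) (Q y)" using ws_hm[OF dP hdP a(1)] i unfolding wsrc_def wtgt_def Q_def by simp
  have wPa: "wk lf i (ws lf i g h) a" using hm_wk[OF dP a(1)] i by simp
  have sQa: "s k (Q a) = Q a" using ws_dim[OF hdP i(3) l(3) ac(1) wPa a(2)] unfolding Q_def by simp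
  have dB: "dm False l B (Suc k) (Q a) (G b)"
    using par_hm[OF Qa b' sQa sb'] wb' unfolding dm_def by simp
  obtain e2 where e2: "E (Suc k) e2" "s k e2 = Q a" "t k e2 = G b"
    using FFP[OF P cj1(2) i(8,5) dB a(3)] a(4,5) LA by auto
  have e2c: "e2 \<in> Cl" using E_cell e2 by auto
  
  have Pc: "ws lf i g h \<in> Cl" using hd_P[OF l(1) ln g(1) hc(1) g(2) hc(2) wgh(1)] by simp
  have whP: "wk lf i h (ws lf i g h)" using wk_ws[OF i(1) g(1) hc(1) wgh(1) wgh(2)] .
  have whQa: "wk lf i h (Q a)" using wk_ws[OF i(1) Pc ac(1) wPa whP] unfolding Q_def .
  have we2: "wk lf i h e2" using wk_sk[OF i(3) l(3) e2c] whQa e2(2) by simp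
  have sk_h: "s k h = h" using hd_s[OF hdh i(3) l(3)] .
  have EFe2: "E (Suc k) (F e2)" using W_ws[OF i(5) e2(1)] i hc(1) sk_h we2 unfolding F_def by simp
  have sFe2: "s k (F e2) = F (Q a)" "t k (F e2) = F (G b)"
    using ws_s[OF hdh i(3) l(3) e2c we2] ws_t[OF hdh i(3) l(3) e2c we2] e2 unfolding F_def by auto
  have wa: "wk lf i h a" using hm_wk[OF d a(1)] i by simp
  have Fac: "F a \<in> Cl" using ws_cell[OF i(1) hc(1) ac(1) wa] unfolding F_def .
  have wga: "wk lf i g (F a)" using wk_ws[OF i(1) hc(1) ac(1) wa wgh(1)] unfolding F_def .
  have FQa: "F (Q a) = Q' (F a)"
  proof -
    have "Q a = G (F a)" using wsassoc[OF i(1) g(1) hc(1) ac(1) wgh(1) wa] unfolding F_def G_def Q_def by simp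
    then show ?thesis using wsassoc[OF i(1) hc(1) g(1) Fac wgh(2) wga] unfolding F_def G_def Q'_def by simp
  qed
  have FGb: "F (G b) = Q' b" using wsassoc[OF i(1) hc(1) g(1) bc wgh(2) wb] unfolding F_def G_def Q'_def by simp
  have Fa: "F a \<in> hm k (F x) (F y)" using ws_hm[OF d hdh a(1)] i srcF unfolding F_def by simp
  have hdP': "hdim i (ws lf i h g)" using hd_P[OF l(1) ln hc(1) g(1) hc(2) g(2) wgh(2)] by simp
  have dP': "dm lf i (ws lf i h g) k (F x) (F y)" using dm_P[OF dF wgh(2) hc(1) g(1) i(1)] .
  have QFa: "Q' (F a) \<in> hm k (Q' (F x)) (Q' (F y))"
    using ws_hm[OF dP' hdP' Fa] i unfolding wsrc_def wtgt_def Q'_def by simp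
  have wB'1: "wk False l B' (Q' (F a))" using hm_wk[OF cj2(4) QFa] i by simp
  have wB': "wk False l B' (F e2)" using wk_sk[OF l(2,3)] EFe2 E_cell wB'1 sFe2 FQa by metis
  have ER: "E (Suc k) (ws False l B' (F e2))" using W_ws[OF i(5) EFe2] i Bc wB' by simp
  have Fe2c: "F e2 \<in> Cl" using E_cell EFe2 by simp
  have Fac2: "s l (F a) = s l (F x)" "t l (F a) = t l (F y)" using hm_lo[OF Fa] l by auto
  have bl: "s l b = s l (F x)" "t l b = t l (F y)" using hm_lo[OF b] l by auto
  have sR: "s k (ws False l B' (F e2)) = ws True l A' (F a)"
    using ws_s[OF hdB(2) l(2,3) Fe2c wB'] sFe2 FQa cj2(7)[OF Fac Fac2] by simp
  have tR: "t k (ws False l B' (F e2)) = ws True l A' b"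
    using ws_t[OF hdB(2) l(2,3) Fe2c wB'] sFe2 FGb cj2(7)[OF bc bl] by simp
  have sFa: "s k (F a) = F a" using ws_dim[OF hdh i(3) l(3) ac(1) wa a(2)] unfolding F_def .
  have wA': "wk True l A' (F a)" using hm_wk[OF cj2(3) Fa] i by simp
  have dA: "dm True l A' (Suc k) (F a) b"
    using par_hm[OF Fa b sFa sb] wA' unfolding dm_def by simp
  obtain e where e: "E (Suc k) e" "s k e = F a" "t k e = b"
    using FFP[OF P cj2(1) i(8,5) dA ER] sR tR by auto
  show "\<exists>a e. a \<in> hm k x y \<and> s k a = a \<and> E (Suc k) e \<and> s k e = ws lf i h a \<and> t k e = b"
    using a(1,2) e unfolding F_def by blast
qed

lemma Psi_all: assumes "l \<le> n" shows "1 \<le> l \<longrightarrow> Psi l"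
  using assms
proof (induction l rule: desc)
  case top
  show ?case unfolding Psi_def
  proof (intro impI allI)
    fix lf h assume n1: "1 \<le> n" and h: "E n h"
    have "\<forall>k. n \<le> k \<and> k < n \<longrightarrow> ES lf (n - 1) h k" by auto
    moreover have "BJ lf (n-1) h" unfolding BJ_def
    proof (intro allI impI)
      fix x y assume d: "dm lf (n-1) h n x y"
      define p where "p = n - 1"
      have p: "p < n" "\<not> p + 1 < n" using n1 p_def by auto
      obtain g where g: "g \<in> Cl" "s p g = t p h" "t p g = s p h"
        "c p h g = s p h" "c p g h = t p h" using h E_top p_def by blast
      have hc: "h \<in> Cl" using E_cell h by simp
      have xy: "x \<in> Cl" "y \<in> Cl" "s p x = x" "s p y = y" using d unfolding dm_def par_def p_def by auto
      have txy: "t p x = x" "t p y = y" using xy dim_s p by auto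
      have hmp: "\<And>u v. hm n u v = {a \<in> Cl. s p a = u \<and> t p a = v}" unfolding hm_def p_def by simp
      show "bij_betw (ws lf (n-1) h) (hm n x y) (hm n (wsrc lf (n-1) h n x) (wtgt lf (n-1) h n y))"
      proof (cases lf)
        case True
        have w: "t p h = x" using d True xy unfolding dm_def wk_def p_def by simp
        have cod: "wsrc lf (n-1) h n x = s p h" "wtgt lf (n-1) h n y = y"
          using True p unfolding wsrc_def wtgt_def p_def by auto
        have fd: "ws lf (n-1) h = c p h" using True p_def unfolding ws_def by auto
        show ?thesis unfolding cod fd
        proof (intro bij_betw_byWitness[where f'="c p g"])
          show "\<forall>a\<in>hm n x y. c p g (c p h a) = a"
          proof
            fix a assume "a \<in> hm n x y"
            then have ac: "a \<in> Cl" "s p a = x" "t p a = y" unfolding hmp by auto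
            have "c p (c p g h) a = c p g (c p h a)" by (rule assoc) (use g hc ac w p in auto)
            then show "c p g (c p h a) = a" using g(5) ac w p by simp
          qed
          show "\<forall>a\<in>hm n (s p h) y. c p h (c p g a) = a"
          proof
            fix a assume "a \<in> hm n (s p h) y"
            then have ac: "a \<in> Cl" "s p a = s p h" "t p a = y" unfolding hmp by auto
            have "c p (c p h g) a = c p h (c p g a)" by (rule assoc) (use g hc ac w p in auto)
            then show "c p h (c p g a) = a" using g(4) ac w p by simp
          qed
          show "c p h ` hm n x y \<subseteq> hm n (s p h) y"
            using g hc w p unfolding hmp by auto
          show "c p g ` hm n (s p h) y \<subseteq> hm n x y"
            using g hc w p unfolding hmp by auto
        qed
      next
        case False
        have w: "y = s p h" using d False xy txy unfolding dm_def wk_def p_def by simp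
        have cod: "wsrc lf (n-1) h n x = x" "wtgt lf (n-1) h n y = t p h"
          using False p unfolding wsrc_def wtgt_def p_def by auto
        have fd: "ws lf (n-1) h = (\<lambda>a. c p a h)" using False p_def unfolding ws_def by auto
        show ?thesis unfolding cod fd
        proof (intro bij_betw_byWitness[where f'="\<lambda>a. c p a g"])
          show "\<forall>a\<in>hm n x y. c p (c p a h) g = a"
          proof
            fix a assume "a \<in> hm n x y"
            then have ac: "a \<in> Cl" "s p a = x" "t p a = y" unfolding hmp by auto
            have "c p (c p a h) g = c p a (c p h g)" by (rule assoc) (use g hc ac w p in auto)
            then show "c p (c p a h) g = a" using g(4) ac w p by simp
          qed
          show "\<forall>a\<in>hm n x (t p h). c p (c p a g) h = a"
          proof
            fix a assume "a \<in> hm n x (t p h)"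
            then have ac: "a \<in> Cl" "s p a = x" "t p a = t p h" unfolding hmp by auto
            have "c p (c p a g) h = c p a (c p g h)" by (rule assoc) (use g hc ac w p in auto)
            then show "c p (c p a g) h = a" using g(5) ac w p by simp
          qed
          show "(\<lambda>a. c p a h) ` hm n x y \<subseteq> hm n x (t p h)"
            using g hc w p unfolding hmp by auto
          show "(\<lambda>a. c p a g) ` hm n x (t p h) \<subseteq> hm n x y"
            using g hc w p unfolding hmp by auto
        qed
      qed
    qed
    ultimately show "(\<forall>k. n \<le> k \<and> k < n \<longrightarrow> ES lf (n - 1) h k) \<and> BJ lf (n - 1) h" by blast
  qed
next
  case (step m)
  show ?case
  proof
    assume m1: "1 \<le> m"
    have P: "Psi (Suc m)" using step.IH by simp
    obtain i where l: "m = Suc i" using m1 by (cases m) auto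
    show "Psi m" unfolding Psi_def
    proof (intro allI impI)
      fix lf h assume h: "E m h"
      have mi: "m - 1 = i" using l by simp
      have "BJ lf (m - 1) h" using BJ_step[OF P l step.hyps h] mi by simp
      moreover have "\<forall>k. m \<le> k \<and> k < n \<longrightarrow> ES lf (m - 1) h k"
      proof (intro allI impI)
        fix k assume k: "m \<le> k \<and> k < n"
        show "ES lf (m - 1) h k"
        proof (cases "k = m")
          case True then show ?thesis using ES_base[OF l step.hyps h] mi by simp
        next
          case False then show ?thesis using ES_step[OF P l _ _ h] k mi by simp
        qed
      qed
      ultimately show "(\<forall>k. m \<le> k \<and> k < n \<longrightarrow> ES lf (m - 1) h k) \<and> BJ lf (m - 1) h" by blast
    qed
  qed
qed

lemma hom_sel: "cells (hom C k p q) = hm k p q" "src (hom C k p q) = (\<lambda>j. s (k+j))"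
  "tgt (hom C k p q) = (\<lambda>j. t (k+j))" "comp (hom C k p q) = (\<lambda>j. c (k+j))"
  unfolding hom_def hm_def by auto

lemma hom_eqv_aux: assumes k: "1 \<le> k"
  shows "\<forall>j e. 1 \<le> j \<longrightarrow> k + j + d = n \<longrightarrow> e \<in> hm k p q \<longrightarrow> eqv_aux n C d (k+j) e \<longrightarrow>
     eqv_aux (n-k) (hom C k p q) d j e"
proof (induction d)
  case 0
  show ?case
  proof (intro allI impI)
    fix j e assume j: "1 \<le> j" "k + j + 0 = n" and e: "e \<in> hm k p q" and ea: "eqv_aux n C 0 (k+j) e"
    define r where "r = k + j - 1"
    have r: "k + (j - 1) = r" "k - 1 < r" "r < n" using j k r_def by auto
    obtain g where g: "is_cell n C (k+j) g" "s r g = t r e" "t r g = s r e" "c r e g = s r e" "c r g e = t r e"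
      using ea r_def by auto
    have gc: "g \<in> Cl" using g(1) unfolding is_cell_def by simp
    have ec: "e \<in> Cl" "s (k-1) e = p" "t (k-1) e = q" using e unfolding hm_def by auto
    have "s (k-1) g = p" using lo_ss[of "k-1" r g "t r e"] r gc g(2) ec by simp
    moreover have "t (k-1) g = q" using lo_tt[of "k-1" r g "s r e"] r gc g(3) ec by simp
    ultimately have "g \<in> hm k p q" using gc unfolding hm_def by simp
    then have "is_cell (n-k) (hom C k p q) j g" using g(1) j unfolding is_cell_def hom_sel by auto
    then show "eqv_aux (n-k) (hom C k p q) 0 j e" unfolding eqv_aux.simps hom_sel r(1) using g by auto
  qed
next
  case (Suc d)
  show ?case
  proof (intro allI impI)
    fix j e assume j: "1 \<le> j" "k + j + Suc d = n" and e: "e \<in> hm k p q" and ea: "eqv_aux n C (Suc d) (k+j) e"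
    define r where "r = k + j - 1"
    have r: "k + (j - 1) = r" "k - 1 < r" "r < n" "r < k + j" "k + j < n" "k + (j + 1) = k + j + 1" using j k r_def by auto
    have ec: "e \<in> Cl" "s (k-1) e = p" "t (k-1) e = q" using e unfolding hm_def by auto
    obtain g a b where w: "is_cell n C (k+j) g" "s r g = t r e" "t r g = s r e"
       "is_cell n C (k+j+1) a" "s (k+j) a = c r g e" "t (k+j) a = t r e" "eqv_aux n C d (k+j+1) a"
       "is_cell n C (k+j+1) b" "s (k+j) b = c r e g" "t (k+j) b = s r e" "eqv_aux n C d (k+j+1) b"
      using ea r_def by auto
    have gc: "g \<in> Cl" "a \<in> Cl" "b \<in> Cl" using w unfolding is_cell_def by auto
    have "s (k-1) g = p" using lo_ss[of "k-1" r g "t r e"] r gc w(2) ec by simp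
    moreover have "t (k-1) g = q" using lo_tt[of "k-1" r g "s r e"] r gc w(3) ec by simp
    ultimately have gh: "g \<in> hm k p q" using gc unfolding hm_def by simp
    have "s (k-1) a = s (k-1) (c r g e)" using lo_ss[of "k-1" "k+j" a "c r g e"] r gc w(5) by simp
    also have "\<dots> = p" using r gc ec w(2,3) \<open>s (k-1) g = p\<close> by simp
    finally have sa: "s (k-1) a = p" .
    have "t (k-1) a = t (k-1) (t r e)" using lo_tt[of "k-1" "k+j" a "t r e"] r gc w(6) by simp
    then have ta: "t (k-1) a = q" using r ec by simp
    have "s (k-1) b = s (k-1) (c r e g)" using lo_ss[of "k-1" "k+j" b "c r e g"] r gc w(9) by simp
    also have "\<dots> = p" using r gc ec w(2,3) by simp
    finally have sb: "s (k-1) b = p" .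
    have "t (k-1) b = t (k-1) (s r e)" using lo_tt[of "k-1" "k+j" b "s r e"] r gc w(10) by simp
    then have tb: "t (k-1) b = q" using r ec by simp
    have ah: "a \<in> hm k p q" "b \<in> hm k p q" using gc sa ta sb tb unfolding hm_def by auto
    have IHa: "eqv_aux (n-k) (hom C k p q) d (j+1) a" "eqv_aux (n-k) (hom C k p q) d (j+1) b"
      using Suc.IH ah w(7,11) j r(6) by auto
    have ic: "is_cell (n-k) (hom C k p q) j g" "is_cell (n-k) (hom C k p q) (j+1) a"
       "is_cell (n-k) (hom C k p q) (j+1) b"
      using w(1,4,8) gh ah j unfolding is_cell_def hom_sel by auto
    show "eqv_aux (n-k) (hom C k p q) (Suc d) j e" unfolding eqv_aux.simps hom_sel r(1)
      using ic IHa w by auto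
  qed
qed

lemma hom_eqv: assumes "1 \<le> k" "k < n" "E (Suc k) e" "e \<in> hm k p q"
  shows "eqv (n-k) (hom C k p q) 1 e"
proof -
  have ea: "eqv_aux n C (n - Suc k) (Suc k) e" using assms(3) unfolding eqv_def by simp
  have "eqv_aux (n-k) (hom C k p q) (n - Suc k) 1 e"
    using hom_eqv_aux[OF assms(1), of "n - Suc k" p q] assms ea by auto
  moreover have "is_cell (n-k) (hom C k p q) 1 e"
    using assms E_dim[OF assms(3)] unfolding is_cell_def hom_sel by auto
  ultimately show ?thesis unfolding eqv_def using assms(2) by (simp add: Suc_diff_Suc)
qed

definition QI where "QI k F x y x' y' \<longleftrightarrow> (\<forall>a \<in> hm k x y. F a \<in> hm k x' y') \<and>
  (\<forall>e j. e \<in> hm k x y \<longrightarrow> k < j \<longrightarrow> E j e \<longrightarrow> E j (F e)) \<and>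
  (\<forall>e \<in> hm k x y. \<forall>j. k \<le> j \<and> j < n \<longrightarrow> s j (F e) = F (s j e) \<and> t j (F e) = F (t j e)) \<and>
  (k < n \<longrightarrow> (\<forall>b \<in> hm k x' y'. s k b = b \<longrightarrow> (\<exists>a \<in> hm k x y. s k a = a \<and>
       (\<exists>e. E (Suc k) e \<and> s k e = F a \<and> t k e = b)))) \<and>
  (k = n \<longrightarrow> bij_betw F (hm n x y) (hm n x' y'))"

lemma QI_ws: assumes l: "1 \<le> l" "l \<le> k" "k \<le> n" and h: "E l h" and d: "dm lf (l-1) h k x y"
  shows "QI k (ws lf (l-1) h) x y (wsrc lf (l-1) h k x) (wtgt lf (l-1) h k y)"
proof -
  obtain i where i: "l = Suc i" using l(1) by (cases l) auto
  have li: "l - 1 = i" using i by simp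
  have hdh: "hdim i h" using hd_E[of i h] h i by simp
  have hc: "h \<in> Cl" using E_cell h .
  have Ps: "Psi l" using Psi_all[of l] l by simp
  note d' = d[unfolded li]
  have q1: "\<forall>a \<in> hm k x y. ws lf i h a \<in> hm k (wsrc lf i h k x) (wtgt lf i h k y)"
    using ws_hm[OF d' hdh] i l by auto
  have q2: "\<forall>e j. e \<in> hm k x y \<longrightarrow> k < j \<longrightarrow> E j e \<longrightarrow> E j (ws lf i h e)"
  proof (intro allI impI)
    fix e j assume e: "e \<in> hm k x y" "k < j" "E j e"
    have j: "j \<le> n" "i + 1 < j" "i < j - 1" "j - 1 < n" using E_le[OF e(3)] e(2) i l by auto
    show "E j (ws lf i h e)" using W_ws[OF j(1) e(3) j(2) hc hd_s[OF hdh j(3,4)] hm_wk[OF d' e(1)]] i l by simp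
  qed
  have q3: "\<forall>e \<in> hm k x y. \<forall>j. k \<le> j \<and> j < n \<longrightarrow> s j (ws lf i h e) = ws lf i h (s j e) \<and> t j (ws lf i h e) = ws lf i h (t j e)"
  proof (intro ballI allI impI)
    fix e j assume e: "e \<in> hm k x y" and j: "k \<le> j \<and> j < n"
    have j': "i < j" "j < n" using j i l by auto
    have w: "wk lf i h e" using hm_wk[OF d' e] i l by simp
    show "s j (ws lf i h e) = ws lf i h (s j e) \<and> t j (ws lf i h e) = ws lf i h (t j e)"
      using ws_s[OF hdh j' hm_cell[OF e] w] ws_t[OF hdh j' hm_cell[OF e] w] by simp
  qed
  have q4: "k < n \<longrightarrow> (\<forall>b \<in> hm k (wsrc lf i h k x) (wtgt lf i h k y). s k b = b \<longrightarrow> (\<exists>a \<in> hm k x y. s k a = a \<and>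
       (\<exists>e. E (Suc k) e \<and> s k e = ws lf i h a \<and> t k e = b)))"
  proof (intro impI ballI)
    fix b assume k: "k < n" and b: "b \<in> hm k (wsrc lf i h k x) (wtgt lf i h k y)" "s k b = b"
    have "ES lf i h k" using Ps h k l li unfolding Psi_def by auto
    then show "\<exists>a \<in> hm k x y. s k a = a \<and> (\<exists>e. E (Suc k) e \<and> s k e = ws lf i h a \<and> t k e = b)"
      using d' b unfolding ES_def by blast
  qed
  have q5: "k = n \<longrightarrow> bij_betw (ws lf i h) (hm n x y) (hm n (wsrc lf i h k x) (wtgt lf i h k y))"
  proof
    assume k: "k = n"
    have "BJ lf i h" using Ps h li unfolding Psi_def by auto
    then show "bij_betw (ws lf i h) (hm n x y) (hm n (wsrc lf i h k x) (wtgt lf i h k y))"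
      using d' k unfolding BJ_def by auto
  qed
  show ?thesis unfolding QI_def li using q1 q2 q3 q4 q5 by blast
qed

lemma QI_comp: assumes F: "QI k F x y x' y'" and G: "QI k G x' y' x'' y''" and k: "1 \<le> k" "k \<le> n"
  shows "QI k (G \<circ> F) x y x'' y''"
proof -
  have F1: "\<And>a. a \<in> hm k x y \<Longrightarrow> F a \<in> hm k x' y'" using F unfolding QI_def by blast
  have G1: "\<And>a. a \<in> hm k x' y' \<Longrightarrow> G a \<in> hm k x'' y''" using G unfolding QI_def by blast
  have F2: "\<And>e j. e \<in> hm k x y \<Longrightarrow> k < j \<Longrightarrow> E j e \<Longrightarrow> E j (F e)" using F unfolding QI_def by blast
  have G2: "\<And>e j. e \<in> hm k x' y' \<Longrightarrow> k < j \<Longrightarrow> E j e \<Longrightarrow> E j (G e)" using G unfolding QI_def by blast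
  have F3: "\<And>e j. e \<in> hm k x y \<Longrightarrow> k \<le> j \<Longrightarrow> j < n \<Longrightarrow> s j (F e) = F (s j e) \<and> t j (F e) = F (t j e)"
    using F unfolding QI_def by blast
  have G3: "\<And>e j. e \<in> hm k x' y' \<Longrightarrow> k \<le> j \<Longrightarrow> j < n \<Longrightarrow> s j (G e) = G (s j e) \<and> t j (G e) = G (t j e)"
    using G unfolding QI_def by blast
  have sj: "\<And>e j. e \<in> hm k x y \<Longrightarrow> k \<le> j \<Longrightarrow> j < n \<Longrightarrow> s j e \<in> hm k x y \<and> t j e \<in> hm k x y"
  proof -
    fix e j assume e: "e \<in> hm k x y" and j: "k \<le> j" "j < n"
    have ec: "e \<in> Cl" "s (k-1) e = x" "t (k-1) e = y" using e unfolding hm_def by auto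
    have "k - 1 < j" using j k by simp
    then show "s j e \<in> hm k x y \<and> t j e \<in> hm k x y" using ec j unfolding hm_def by auto
  qed
  have q1: "\<forall>a \<in> hm k x y. (G \<circ> F) a \<in> hm k x'' y''" using F1 G1 by simp
  have q2: "\<forall>e j. e \<in> hm k x y \<longrightarrow> k < j \<longrightarrow> E j e \<longrightarrow> E j ((G \<circ> F) e)" using F1 F2 G2 by simp
  have q3: "\<forall>e \<in> hm k x y. \<forall>j. k \<le> j \<and> j < n \<longrightarrow> s j ((G \<circ> F) e) = (G \<circ> F) (s j e) \<and> t j ((G \<circ> F) e) = (G \<circ> F) (t j e)"
    using F1 F3 G3 by simp
  have q4: "k < n \<longrightarrow> (\<forall>b \<in> hm k x'' y''. s k b = b \<longrightarrow> (\<exists>a \<in> hm k x y. s k a = a \<and>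
       (\<exists>e. E (Suc k) e \<and> s k e = (G \<circ> F) a \<and> t k e = b)))"
  proof (intro impI ballI)
    fix b assume kn: "k < n" and b: "b \<in> hm k x'' y''" "s k b = b"
    obtain a' e1 where a': "a' \<in> hm k x' y'" "s k a' = a'" "E (Suc k) e1" "s k e1 = G a'" "t k e1 = b"
      using G b kn unfolding QI_def by blast
    obtain a e2 where a: "a \<in> hm k x y" "s k a = a" "E (Suc k) e2" "s k e2 = F a" "t k e2 = a'"
      using F a'(1,2) kn unfolding QI_def by blast
    have Fa: "F a \<in> hm k x' y'" using F1 a(1) .
    have e2c: "e2 \<in> Cl" using E_cell a(3) .
    have kk: "k - 1 < k" using k by simp
    have "s (k-1) e2 = s (k-1) (F a)" using lo_ss[OF kk kn e2c a(4)] .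
    moreover have "t (k-1) e2 = t (k-1) (F a)" using lo_ts[OF kk kn e2c a(4)] .
    ultimately have e2h: "e2 \<in> hm k x' y'" using Fa e2c unfolding hm_def by simp
    have EG: "E (Suc k) (G e2)" using G2[OF e2h _ a(3)] by simp
    have sG: "s k (G e2) = G (F a)" "t k (G e2) = G a'" using G3[OF e2h order.refl kn] a(4,5) by auto
    have c1: "G e2 \<in> Cl" "e1 \<in> Cl" using E_cell EG a'(3) by auto
    have ET: "E (Suc k) (c k (G e2) e1)" using T[of "Suc k" "G e2" e1] EG a'(3,4) sG kn by simp
    have "s k (c k (G e2) e1) = G (F a)" "t k (c k (G e2) e1) = b" using c1 sG a'(4,5) kn by auto
    then show "\<exists>a \<in> hm k x y. s k a = a \<and> (\<exists>e. E (Suc k) e \<and> s k e = (G \<circ> F) a \<and> t k e = b)"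
      using a(1,2) ET by auto
  qed
  have q5: "k = n \<longrightarrow> bij_betw (G \<circ> F) (hm n x y) (hm n x'' y'')"
    using F G bij_betw_trans unfolding QI_def by blast
  show ?thesis unfolding QI_def using q1 q2 q3 q4 q5 by blast
qed

lemma par_parallel: "1 \<le> k \<Longrightarrow> k \<le> n \<Longrightarrow> parallel n C k x y \<Longrightarrow> par k x y"
  unfolding parallel_def par_def is_cell_def by auto

lemma QI_whisk: assumes "1 \<le> k" "k \<le> n" "whisk_fun n C k x y x' y' F" shows "QI k F x y x' y'"
  using assms(3)
proof (induction rule: whisk_fun.induct)
  case (left l h x y)
  have d: "dm True (l-1) h k x y" using par_parallel[OF assms(1,2) left(4)] left(5) unfolding dm_def wk_def by simp
  have f: "(\<lambda>c. comp C (l - 1) h c) = ws True (l-1) h" unfolding ws_def by auto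
  have w: "wsrc True (l-1) h k x = (if l < k then c (l-1) h x else s (k-1) h)"
    "wtgt True (l-1) h k y = (if l < k then c (l-1) h y else y)"
    using left(1,2) unfolding wsrc_def wtgt_def ws_def by auto
  show ?case using QI_ws[OF left(1,2) assms(2) left(3) d] unfolding f w .
next
  case (right l h x y)
  have d: "dm False (l-1) h k x y" using par_parallel[OF assms(1,2) right(4)] right(5) unfolding dm_def wk_def by simp
  have f: "(\<lambda>c. comp C (l - 1) c h) = ws False (l-1) h" unfolding ws_def by auto
  have w: "wsrc False (l-1) h k x = (if l < k then c (l-1) x h else x)"
    "wtgt False (l-1) h k y = (if l < k then c (l-1) y h else t (k-1) h)"
    using right(1,2) unfolding wsrc_def wtgt_def ws_def by auto
  show ?case using QI_ws[OF right(1,2) assms(2) right(3) d] unfolding f w .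
next
  case (compose x y x' y' F x'' y'' G)
  then show ?case using QI_comp assms(1,2) by blast
qed

lemma final: assumes "1 \<le> k" "k \<le> n" "whisk_fun n C k x y x' y' F"
  shows "ess_surj (n - k) (hom C k x y) (hom C k x' y') F
         \<and> (k = n \<longrightarrow> bij_betw F (cells (hom C k x y)) (cells (hom C k x' y')))"
proof -
  have Q: "QI k F x y x' y'" using QI_whisk[OF assms] .
  have bij: "k = n \<longrightarrow> bij_betw F (hm k x y) (hm k x' y')" using Q unfolding QI_def by auto
  have es: "ess_surj (n - k) (hom C k x y) (hom C k x' y') F"
  proof (cases "k = n")
    case True
    then have "bij_betw F (hm k x y) (hm k x' y')" using bij by simp
    then have img: "F ` hm k x y = hm k x' y'" by (simp add: bij_betw_def)
    have "\<forall>b\<in>hm k x' y'. \<exists>a\<in>hm k x y. F a = b"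
    proof
      fix b assume "b \<in> hm k x' y'"
      then have "b \<in> F ` hm k x y" using img by simp
      then show "\<exists>a\<in>hm k x y. F a = b" by (metis imageE)
    qed
    then show ?thesis unfolding ess_surj_def hom_sel using True by simp
  next
    case False
    then have kn: "k < n" using assms(2) by simp
    have m: "n - k \<noteq> 0" using kn by simp
    show ?thesis unfolding ess_surj_def using m
    proof (simp only: if_False, intro allI impI)
      fix b assume b0: "is_cell (n - k) (hom C k x' y') 0 b"
      have b: "b \<in> hm k x' y'" "s k b = b" using b0 kn unfolding is_cell_def hom_sel by auto
      obtain a e where a: "a \<in> hm k x y" "s k a = a" "E (Suc k) e" "s k e = F a" "t k e = b"
        using Q kn b unfolding QI_def by blast
      have Fa: "F a \<in> hm k x' y'" using Q a(1) unfolding QI_def by blast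
      have ec: "e \<in> Cl" using E_cell a(3) .
      have kk: "k - 1 < k" using assms(1) by simp
      have "s (k-1) e = s (k-1) (F a)" using lo_ss[OF kk kn ec a(4)] .
      moreover have "t (k-1) e = t (k-1) (F a)" using lo_ts[OF kk kn ec a(4)] .
      ultimately have eh: "e \<in> hm k x' y'" using Fa ec unfolding hm_def by simp
      have ic1: "is_cell (n - k) (hom C k x y) 0 a" using a(1,2) unfolding is_cell_def hom_sel by simp
      have ic2: "is_cell (n - k) (hom C k x' y') 1 e"
        using eh E_dim[OF a(3)] unfolding is_cell_def hom_sel by auto
      have eq: "eqv (n - k) (hom C k x' y') 1 e" using hom_eqv[OF assms(1) kn a(3) eh] .
      show "\<exists>a e. is_cell (n - k) (hom C k x y) 0 a \<and> is_cell (n - k) (hom C k x' y') 1 e \<and>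
              src (hom C k x' y') 0 e = F a \<and> tgt (hom C k x' y') 0 e = b \<and> eqv (n - k) (hom C k x' y') 1 e"
        using ic1 ic2 eq a(4,5) unfolding hom_sel by auto
    qed
  qed
  show ?thesis using es bij unfolding hom_sel by simp
qed

end

theorem proposition5p0p1:
  fixes C :: "'a ncat" and n k :: nat and x y x' y' :: 'a and F :: "'a \<Rightarrow> 'a"
  assumes "1 \<le> k" and "k \<le> n" and "n \<le> 4"
    and "strict_ncat n C"
    and "whisk_fun n C k x y x' y' F"
  shows "ess_surj (n - k) (hom C k x y) (hom C k x' y') F
         \<and> (k = n \<longrightarrow> bij_betw F (cells (hom C k x y)) (cells (hom C k x' y')))"
    using sc.final[OF sc.intro[OF assms(4)] assms(1,2,5)] .

end
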